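(* Let $g,\eta_p,\lambda>0$. Let $q_l,q_r$ be two states, $q=(h,hu,h\sigma_{xx},h\sigma_{zz})$ with $h>0$, $\sigma_{xx}>0$, $\sigma_{zz}>0$. Define $P_l=P(q_l)$, $P_r=P(q_r)$, $a_l=\sqrt{\partial_h P|_{\boldsymbol s}(h_l,\boldsymbol s_l)}$, $a_r=\sqrt{\partial_h P|_{\boldsymbol s}(h_r,\boldsymbol s_r)}$, and the relaxation speeds $$\frac{c_l}{h_l}=a_l+2\Big(\max(0,u_l-u_r)+\frac{\max(0,P_r-P_l)}{h_la_l+h_ra_r}\Big),\qquad \frac{c_r}{h_r}=a_r+2\Big(\max(0,u_l-u_r)+\frac{\max(0,P_l-P_r)}{h_la_l+h_ra_r}\Big).$$ With $\pi_l=P_l$, $\pi_r=P_r$, define the intermediate heights by $$\frac{1}{h_l^*}=\frac{1}{h_l}+\frac{c_r(u_r-u_l)+\pi_l-\pi_r}{c_l(c_l+c_r)},\qquad \frac{1}{h_r^*}=\frac{1}{h_r}+\frac{c_l(u_r-u_l)+\pi_r-\pi_l}{c_r(c_l+c_r)}.$$ Then $h_l^*$ and $h_r^*$ are well defined and positive (i.e. the right-hand sides above are positive), and $$\forall h\in[h_l,h_l^*]:\ h^2\,\partial_hP|_{\boldsymbol s}(h,\boldsymbol s_l)\le c_l^2,\qquad \forall h\in[h_r,h_r^*]:\ h^2\,\partial_hP|_{\boldsymbol s}(h,\boldsymbol s_r)\le c_r^2,$$ where $[a,b]$ denotes the closed interval between $a$ and $b$ whatever their order. Moreover, the finite volume scheme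 built on these speeds (described in the context) satisfies the discrete energy inequality: there is a numerical energy flux $\mathcal G(q_l,q_r)$ with $\mathcal G(q,q)=G(q)$ such that, under the CFL condition, $E(q_i^{n+1})-E(q_i^n)+\frac{\Delta t}{\Delta x_i}\big(\mathcal G(q_i^n,q_{i+1}^n)-\mathcal G(q_{i-1}^n,q_i^n)\big)\le 0$ for all $i$.
   Context: We consider the one-dimensional system (shallow viscoelastic flow without source terms) for $h\ge0$, velocity $u$, and $\sigma_{xx},\sigma_{zz}>0$: $\partial_t h+\partial_x(hu)=0$, $\partial_t(hu)+\partial_x(hu^2+P)=0$, $\partial_t(h\sigma_{xx})+\partial_x(h\sigma_{xx}u)-2h\sigma_{xx}\partial_xu=0$, $\partial_t(h\sigma_{zz})+\partial_x(h\sigma_{zz}u)+2h\sigma_{zz}\partial_xu=0$, with pressure $P=g\frac{h^2}{2}+\frac{\eta_p}{2\lambda}h(\sigma_{zz}-\sigma_{xx})$, constants $g,\eta_p,\lambda>0$. The (pseudo-conservative) state is $q=(h,hu,h\sigma_{xx},h\sigma_{zz})$. Set $\boldsymbol s=(s_{xx},s_{zz})=(\sigma_{xx}^{-1/2}/h,\ \sigma_{zz}^{1/2}/h)$; viewing $P$ as a function of $(h,\boldsymbol s)$, $P=g h^2/2+\frac{\eta_p}{2\lambda}(h^3s_{zz}^2-\frac{1}{hs_{xx}^2})$, and $\partial_hP|_{\boldsymbol s}=gh+\frac{\eta_p}{2\lambda}(3\sigma_{zz}+\sigma_{xx})$. Energy: $E(q)=h\frac{u^2}{2}+g\frac{h^2}{2}+\frac{\eta_p}{4\lambda}h(\sigma_{xx}+\sigma_{zz}-\ln(\sigma_{xx}\sigma_{zz})-2)$,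 energy flux $G(q)=(E+P)u$. Riemann solver: given $q_l,q_r$ and $c_l,c_r,h_l^*,h_r^*$ as in the claim, set $u^*=\frac{c_lu_l+c_ru_r+\pi_l-\pi_r}{c_l+c_r}$, $\pi^*=\frac{c_r\pi_l+c_l\pi_r-c_lc_r(u_r-u_l)}{c_l+c_r}$, $\sigma_{xx,l}^*=\sigma_{xx,l}(h_l/h_l^* )^2$, $\sigma_{xx,r}^*=\sigma_{xx,r}(h_r/h_r^* )^2$, $\sigma_{zz,l}^*=\sigma_{zz,l}(h_l^*/h_l)^2$, $\sigma_{zz,r}^*=\sigma_{zz,r}(h_r^*/h_r)^2$, $q_l^*=(h_l^*,h_l^*u^*,h_l^*\sigma_{xx,l}^*,h_l^*\sigma_{zz,l}^* )$, $q_r^*$ similarly, and speeds $\Sigma_1=u_l-c_l/h_l$, $\Sigma_2=u^*$, $\Sigma_3=u_r+c_r/h_r$. The self-similar approximate solution $R(\xi)$ equals $q_l$ (with $\pi=\pi_l$) for $\xi<\Sigma_1$, $q_l^*$ (with $\pi=\pi^*$) on $(\Sigma_1,\Sigma_2)$, $q_r^*$ (with $\pi=\pi^*$) on $(\Sigma_2,\Sigma_3)$, $q_r$ (with $\pi=\pi_r$) for $\xi>\Sigma_3$. Numerical fluxes: $\mathcal F_l=(\mathcal F^h,\mathcal F^{hu},\mathcal F_l^{h\sigma_{xx}},\mathcal F_l^{h\sigma_{zz}})$, $\mathcal F_r=(\mathcal F^h,\mathcal F^{hu},\mathcal F_r^{h\sigma_{xx}},\mathcal F_r^{h\sigma_{zz}})$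 where $\mathcal F^h=(hu)$ and $\mathcal F^{hu}=(hu^2+\pi)$ evaluated in $R$ at $\xi=0$, and, writing $w=h\sigma_{xx}$ (resp. $h\sigma_{zz}$), $\mathcal F_l^{w}=(wu)_l+\min(0,\Sigma_1)(w_l^*-w_l)+\min(0,\Sigma_2)(w_r^*-w_l^* )+\min(0,\Sigma_3)(w_r-w_r^* )$, $\mathcal F_r^{w}=(wu)_r-\max(0,\Sigma_1)(w_l^*-w_l)-\max(0,\Sigma_2)(w_r^*-w_l^* )-\max(0,\Sigma_3)(w_r-w_r^* )$. Scheme: cells $(x_{i-1/2},x_{i+1/2})$, $\Delta x_i=x_{i+1/2}-x_{i-1/2}$, time step $\Delta t$, $q_i^{n+1}=q_i^n-\frac{\Delta t}{\Delta x_i}(\mathcal F_l(q_i^n,q_{i+1}^n)-\mathcal F_r(q_{i-1}^n,q_i^n))$. CFL condition: $\Delta t\,A(q_i^n,q_{i+1}^n)\le\frac12\min(\Delta x_i,\Delta x_{i+1})$ for all $i$, with $A(q_l,q_r)=\max(|\Sigma_1|,|\Sigma_2|,|\Sigma_3|)$. *)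

theory Defs
  imports Complex_Main
begin

text \<open>Pseudo-conservative state q = (h, h u, h sigma_xx, h sigma_zz).\<close>
type_synonym state = "real \<times> real \<times> real \<times> real"

definition hh :: "state \<Rightarrow> real" where "hh q = fst q"
definition uu :: "state \<Rightarrow> real" where "uu q = fst (snd q) / fst q"
definition sig_xx :: "state \<Rightarrow> real" where "sig_xx q = fst (snd (snd q)) / fst q"
definition sig_zz :: "state \<Rightarrow> real" where "sig_zz q = snd (snd (snd q)) / fst q"

definition admissible :: "state \<Rightarrow> bool" where
  "admissible q \<longleftrightarrow> hh q > 0 \<and> sig_xx q > 0 \<and> sig_zz q > 0"

definition Pres :: "real \<Rightarrow> real \<Rightarrow> real \<Rightarrow> state \<Rightarrow> real" where
  "Pres g eta lam q = g * (hh q)^2 / 2 + eta / (2 * lam) * hh q * (sig_zz q - sig_xx q)"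

definition s_xx :: "state \<Rightarrow> real" where "s_xx q = 1 / (sqrt (sig_xx q) * hh q)"
definition s_zz :: "state \<Rightarrow> real" where "s_zz q = sqrt (sig_zz q) / hh q"

definition P_hs :: "real \<Rightarrow> real \<Rightarrow> real \<Rightarrow> real \<Rightarrow> real \<Rightarrow> real \<Rightarrow> real" where
  "P_hs g eta lam h sx sz = g * h^2 / 2 + eta / (2 * lam) * (h^3 * sz^2 - 1 / (h * sx^2))"

definition dPdh :: "real \<Rightarrow> real \<Rightarrow> real \<Rightarrow> real \<Rightarrow> real \<Rightarrow> real \<Rightarrow> real" where
  "dPdh g eta lam h sx sz = g * h + eta / (2 * lam) * (3 * h^2 * sz^2 + 1 / (h^2 * sx^2))"

definition a_of :: "real \<Rightarrow> real \<Rightarrow> real \<Rightarrow> state \<Rightarrow> real" where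
  "a_of g eta lam q = sqrt (dPdh g eta lam (hh q) (s_xx q) (s_zz q))"

definition c_l :: "real \<Rightarrow> real \<Rightarrow> real \<Rightarrow> state \<Rightarrow> state \<Rightarrow> real" where
  "c_l g eta lam ql qr = hh ql * (a_of g eta lam ql + 2 * (max 0 (uu ql - uu qr)
     + max 0 (Pres g eta lam qr - Pres g eta lam ql)
         / (hh ql * a_of g eta lam ql + hh qr * a_of g eta lam qr)))"

definition c_r :: "real \<Rightarrow> real \<Rightarrow> real \<Rightarrow> state \<Rightarrow> state \<Rightarrow> real" where
  "c_r g eta lam ql qr = hh qr * (a_of g eta lam qr + 2 * (max 0 (uu ql - uu qr)
     + max 0 (Pres g eta lam ql - Pres g eta lam qr)
         / (hh ql * a_of g eta lam ql + hh qr * a_of g eta lam qr)))"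

definition inv_hstar_l :: "real \<Rightarrow> real \<Rightarrow> real \<Rightarrow> state \<Rightarrow> state \<Rightarrow> real" where
  "inv_hstar_l g eta lam ql qr =
     (let cl = c_l g eta lam ql qr; cr = c_r g eta lam ql qr in
      1 / hh ql + (cr * (uu qr - uu ql) + Pres g eta lam ql - Pres g eta lam qr) / (cl * (cl + cr)))"

definition inv_hstar_r :: "real \<Rightarrow> real \<Rightarrow> real \<Rightarrow> state \<Rightarrow> state \<Rightarrow> real" where
  "inv_hstar_r g eta lam ql qr =
     (let cl = c_l g eta lam ql qr; cr = c_r g eta lam ql qr in
      1 / hh qr + (cl * (uu qr - uu ql) + Pres g eta lam qr - Pres g eta lam ql) / (cr * (cl + cr)))"

definition hstar_l :: "real \<Rightarrow> real \<Rightarrow> real \<Rightarrow> state \<Rightarrow> state \<Rightarrow> real" where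
  "hstar_l g eta lam ql qr = 1 / inv_hstar_l g eta lam ql qr"

definition hstar_r :: "real \<Rightarrow> real \<Rightarrow> real \<Rightarrow> state \<Rightarrow> state \<Rightarrow> real" where
  "hstar_r g eta lam ql qr = 1 / inv_hstar_r g eta lam ql qr"

definition between :: "real \<Rightarrow> real \<Rightarrow> real set" where
  "between a b = {min a b .. max a b}"

definition ustar :: "real \<Rightarrow> real \<Rightarrow> real \<Rightarrow> state \<Rightarrow> state \<Rightarrow> real" where
  "ustar g eta lam ql qr =
     (let cl = c_l g eta lam ql qr; cr = c_r g eta lam ql qr in
      (cl * uu ql + cr * uu qr + Pres g eta lam ql - Pres g eta lam qr) / (cl + cr))"

definition pistar :: "real \<Rightarrow> real \<Rightarrow> real \<Rightarrow> state \<Rightarrow> state \<Rightarrow> real" where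
  "pistar g eta lam ql qr =
     (let cl = c_l g eta lam ql qr; cr = c_r g eta lam ql qr in
      (cr * Pres g eta lam ql + cl * Pres g eta lam qr - cl * cr * (uu qr - uu ql)) / (cl + cr))"

definition qstar_l :: "real \<Rightarrow> real \<Rightarrow> real \<Rightarrow> state \<Rightarrow> state \<Rightarrow> state" where
  "qstar_l g eta lam ql qr =
     (let hs = hstar_l g eta lam ql qr; us = ustar g eta lam ql qr;
          sx = sig_xx ql * (hh ql / hs)^2; sz = sig_zz ql * (hs / hh ql)^2 in
      (hs, hs * us, hs * sx, hs * sz))"

definition qstar_r :: "real \<Rightarrow> real \<Rightarrow> real \<Rightarrow> state \<Rightarrow> state \<Rightarrow> state" where
  "qstar_r g eta lam ql qr =
     (let hs = hstar_r g eta lam ql qr; us = ustar g eta lam ql qr;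
          sx = sig_xx qr * (hh qr / hs)^2; sz = sig_zz qr * (hs / hh qr)^2 in
      (hs, hs * us, hs * sx, hs * sz))"

definition Sigma1 :: "real \<Rightarrow> real \<Rightarrow> real \<Rightarrow> state \<Rightarrow> state \<Rightarrow> real" where
  "Sigma1 g eta lam ql qr = uu ql - c_l g eta lam ql qr / hh ql"
definition Sigma2 :: "real \<Rightarrow> real \<Rightarrow> real \<Rightarrow> state \<Rightarrow> state \<Rightarrow> real" where
  "Sigma2 g eta lam ql qr = ustar g eta lam ql qr"
definition Sigma3 :: "real \<Rightarrow> real \<Rightarrow> real \<Rightarrow> state \<Rightarrow> state \<Rightarrow> real" where
  "Sigma3 g eta lam ql qr = uu qr + c_r g eta lam ql qr / hh qr"

text \<open>Value of (state, pi) of the approximate solution R at xi = 0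
  (at a wave of speed exactly 0 both sides give the same fluxes).\<close>
definition R0 :: "real \<Rightarrow> real \<Rightarrow> real \<Rightarrow> state \<Rightarrow> state \<Rightarrow> state \<times> real" where
  "R0 g eta lam ql qr =
     (if 0 < Sigma1 g eta lam ql qr then (ql, Pres g eta lam ql)
      else if 0 < Sigma2 g eta lam ql qr then (qstar_l g eta lam ql qr, pistar g eta lam ql qr)
      else if 0 < Sigma3 g eta lam ql qr then (qstar_r g eta lam ql qr, pistar g eta lam ql qr)
      else (qr, Pres g eta lam qr))"

definition Flux_h :: "real \<Rightarrow> real \<Rightarrow> real \<Rightarrow> state \<Rightarrow> state \<Rightarrow> real" where
  "Flux_h g eta lam ql qr = (let (q, p) = R0 g eta lam ql qr in hh q * uu q)"

definition Flux_hu :: "real \<Rightarrow> real \<Rightarrow> real \<Rightarrow> state \<Rightarrow> state \<Rightarrow> real" where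
  "Flux_hu g eta lam ql qr = (let (q, p) = R0 g eta lam ql qr in hh q * (uu q)^2 + p)"

definition Flux_w_l :: "(state \<Rightarrow> real) \<Rightarrow> real \<Rightarrow> real \<Rightarrow> real \<Rightarrow> state \<Rightarrow> state \<Rightarrow> real" where
  "Flux_w_l w g eta lam ql qr =
     (let S1 = Sigma1 g eta lam ql qr; S2 = Sigma2 g eta lam ql qr; S3 = Sigma3 g eta lam ql qr;
          wl = w ql; wr = w qr; wls = w (qstar_l g eta lam ql qr); wrs = w (qstar_r g eta lam ql qr) in
      wl * uu ql + min 0 S1 * (wls - wl) + min 0 S2 * (wrs - wls) + min 0 S3 * (wr - wrs))"

definition Flux_w_r :: "(state \<Rightarrow> real) \<Rightarrow> real \<Rightarrow> real \<Rightarrow> real \<Rightarrow> state \<Rightarrow> state \<Rightarrow> real" where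
  "Flux_w_r w g eta lam ql qr =
     (let S1 = Sigma1 g eta lam ql qr; S2 = Sigma2 g eta lam ql qr; S3 = Sigma3 g eta lam ql qr;
          wl = w ql; wr = w qr; wls = w (qstar_l g eta lam ql qr); wrs = w (qstar_r g eta lam ql qr) in
      wr * uu qr - max 0 S1 * (wls - wl) - max 0 S2 * (wrs - wls) - max 0 S3 * (wr - wrs))"

definition w_xx :: "state \<Rightarrow> real" where "w_xx q = fst (snd (snd q))"
definition w_zz :: "state \<Rightarrow> real" where "w_zz q = snd (snd (snd q))"

definition Flux_l :: "real \<Rightarrow> real \<Rightarrow> real \<Rightarrow> state \<Rightarrow> state \<Rightarrow> state" where
  "Flux_l g eta lam ql qr =
     (Flux_h g eta lam ql qr, Flux_hu g eta lam ql qr,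
      Flux_w_l w_xx g eta lam ql qr, Flux_w_l w_zz g eta lam ql qr)"

definition Flux_r :: "real \<Rightarrow> real \<Rightarrow> real \<Rightarrow> state \<Rightarrow> state \<Rightarrow> state" where
  "Flux_r g eta lam ql qr =
     (Flux_h g eta lam ql qr, Flux_hu g eta lam ql qr,
      Flux_w_r w_xx g eta lam ql qr, Flux_w_r w_zz g eta lam ql qr)"

definition Amax :: "real \<Rightarrow> real \<Rightarrow> real \<Rightarrow> state \<Rightarrow> state \<Rightarrow> real" where
  "Amax g eta lam ql qr = max \<bar>Sigma1 g eta lam ql qr\<bar>
     (max \<bar>Sigma2 g eta lam ql qr\<bar> \<bar>Sigma3 g eta lam ql qr\<bar>)"

definition scheme_step :: "real \<Rightarrow> real \<Rightarrow> real \<Rightarrow> (int \<Rightarrow> real) \<Rightarrow> real \<Rightarrow> (int \<Rightarrow> state) \<Rightarrow> int \<Rightarrow> state" where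
  "scheme_step g eta lam dx dt qn i =
     (let (a0, a1, a2, a3) = qn i;
          (l0, l1, l2, l3) = Flux_l g eta lam (qn i) (qn (i + 1));
          (r0, r1, r2, r3) = Flux_r g eta lam (qn (i - 1)) (qn i);
          k = dt / dx i in
      (a0 - k * (l0 - r0), a1 - k * (l1 - r1), a2 - k * (l2 - r2), a3 - k * (l3 - r3)))"

definition Energy :: "real \<Rightarrow> real \<Rightarrow> real \<Rightarrow> state \<Rightarrow> real" where
  "Energy g eta lam q = hh q * (uu q)^2 / 2 + g * (hh q)^2 / 2
     + eta / (4 * lam) * hh q * (sig_xx q + sig_zz q - ln (sig_xx q * sig_zz q) - 2)"

definition Gflux :: "real \<Rightarrow> real \<Rightarrow> real \<Rightarrow> state \<Rightarrow> real" where
  "Gflux g eta lam q = (Energy g eta lam q + Pres g eta lam q) * uu q"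

end

theory Submission
  imports Defs
begin


lemma idg: "h0>0 \<Longrightarrow> h1>0 \<Longrightarrow> (h1::real)/2 - h0/2 + h0^2/2*(1/h1-1/h0) = (1/h1-1/h0)^2/2 * (h0^2*h1)"
  by (simp add: field_simps power2_eq_square)
lemma idx: "h0>0 \<Longrightarrow> h1>0 \<Longrightarrow> ((h0::real)^2/h1^2 - 1) - 2*h0*(1/h1-1/h0) = (1/h1-1/h0)^2 * h0^2"
  by (simp add: field_simps power2_eq_square)
lemma idz: "h0>0 \<Longrightarrow> h1>0 \<Longrightarrow> ((h1::real)^2/h0^2 - 1) + 2*h0*(1/h1-1/h0) = (1/h1-1/h0)^2 * (h1^2+2*h0*h1)"
  by (simp add: field_simps power2_eq_square)

lemma internal_id:
  fixes g k h0 h1 sx sz L :: real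
  assumes "h0>0" "h1>0"
  shows "(g*h1/2 + k*(sx*h0^2/h1^2 + sz*h1^2/h0^2 - L - 2)) - (g*h0/2 + k*(sx+sz-L-2))
     + (g*h0^2/2 + 2*k*h0*(sz-sx))*(1/h1-1/h0)
   = (1/h1-1/h0)^2/2 * (g*h0^2*h1 + 2*k*sx*h0^2 + 2*k*sz*(h1^2+2*h0*h1))"
proof -
  have "(g*h1/2 + k*(sx*h0^2/h1^2 + sz*h1^2/h0^2 - L - 2)) - (g*h0/2 + k*(sx+sz-L-2))
     + (g*h0^2/2 + 2*k*h0*(sz-sx))*(1/h1-1/h0)
     = g*((h1::real)/2 - h0/2 + h0^2/2*(1/h1-1/h0)) + k*sx*(((h0::real)^2/h1^2 - 1) - 2*h0*(1/h1-1/h0))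
       + k*sz*(((h1::real)^2/h0^2 - 1) + 2*h0*(1/h1-1/h0))"
    by (simp add: algebra_simps)
  also have "\<dots> = (1/h1-1/h0)^2/2 * (g*h0^2*h1 + 2*k*sx*h0^2 + 2*k*sz*(h1^2+2*h0*h1))"
    unfolding idg[OF assms] idx[OF assms] idz[OF assms] by (simp add: algebra_simps)
  finally show ?thesis .
qed

lemma wave_id:
  fixes g k h0 h1 u0 sx sz j L :: real
  assumes h0: "h0>0" and h1: "h1>0"
  defines "d \<equiv> 1/h1-1/h0"
  defines "u1 \<equiv> u0 + j*d"
  defines "e0 \<equiv> g*h0/2 + k*(sx+sz-L-2)"
  defines "e1 \<equiv> g*h1/2 + k*(sx*h0^2/h1^2 + sz*h1^2/h0^2 - L - 2)"
  defines "p0 \<equiv> g*h0^2/2 + 2*k*h0*(sz-sx)"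
  defines "E0 \<equiv> h0*u0^2/2 + g*h0^2/2 + k*h0*(sx+sz-L-2)"
  defines "E1 \<equiv> h1*u1^2/2 + g*h1^2/2 + k*h1*(sx*h0^2/h1^2 + sz*h1^2/h0^2 - L - 2)"
  shows "(u0 - j/h0) * (E1 - E0) - ((E1 + (p0 - j^2*d)) * u1 - (E0 + p0) * u0)
     = j*d^2/2 * (j^2 - (g*h0^2*h1 + 2*k*sx*h0^2 + 2*k*sz*(h1^2+2*h0*h1)))"
proof -
  have E0e: "E0 = h0*(u0^2/2 + e0)" unfolding E0_def e0_def by (simp add: algebra_simps power2_eq_square)
  have E1e: "E1 = h1*(u1^2/2 + e1)" unfolding E1_def e1_def by (simp add: algebra_simps power2_eq_square)
  have m0: "h0*(u0 - (u0 - j/h0)) = j" using h0 by simp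
  have m1: "h1*(u1 - (u0 - j/h0)) = j" using h0 h1 unfolding u1_def d_def by (simp add: field_simps)
  have s1: "(u0 - j/h0) * (E1 - E0) - (E1 * u1 - E0 * u0) = j*((u0^2/2 + e0) - (u1^2/2 + e1))"
  proof -
    have gen: "\<And>S. S * (E1 - E0) - (E1 * u1 - E0 * u0)
        = h0*(u0 - S)*(u0^2/2 + e0) - h1*(u1 - S)*(u1^2/2 + e1)"
      unfolding E0e E1e by (simp add: field_simps)
    have "(u0 - j/h0) * (E1 - E0) - (E1 * u1 - E0 * u0)
        = h0*(u0 - (u0 - j/h0))*(u0^2/2 + e0) - h1*(u1 - (u0 - j/h0))*(u1^2/2 + e1)"
      by (rule gen)
    then show ?thesis unfolding m0 m1 by (simp add: algebra_simps)
  qed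
  have ie: "e1 - e0 + p0*d = d^2/2 * (g*h0^2*h1 + 2*k*sx*h0^2 + 2*k*sz*(h1^2+2*h0*h1))"
    unfolding e1_def e0_def p0_def d_def using internal_id[OF h0 h1] by simp
  have "(u0 - j/h0) * (E1 - E0) - ((E1 + (p0 - j^2*d)) * u1 - (E0 + p0) * u0)
      = j*((u0^2/2 + e0) - (u1^2/2 + e1)) - (p0 - j^2*d)*u1 + p0*u0"
    using s1 by (simp add: algebra_simps)
  also have "\<dots> = j*(j^2*d^2/2 - (e1 - e0 + p0*d))"
    unfolding u1_def by (simp add: field_simps power2_eq_square power3_eq_cube)
  also have "\<dots> = j*d^2/2 * (j^2 - (g*h0^2*h1 + 2*k*sx*h0^2 + 2*k*sz*(h1^2+2*h0*h1)))"
    unfolding ie by (simp add: algebra_simps)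
  finally show ?thesis .
qed



definition mk :: "real \<Rightarrow> real \<Rightarrow> real \<Rightarrow> real \<Rightarrow> state" where
  "mk h u sx sz = (h, h*u, h*sx, h*sz)"

lemma mk_simps:
  assumes "h \<noteq> 0"
  shows "hh (mk h u sx sz) = h" "uu (mk h u sx sz) = u" "sig_xx (mk h u sx sz) = sx"
    "sig_zz (mk h u sx sz) = sz" "w_xx (mk h u sx sz) = h*sx" "w_zz (mk h u sx sz) = h*sz"
    "fst (snd (mk h u sx sz)) = h*u"
  using assms by (auto simp: mk_def hh_def uu_def sig_xx_def sig_zz_def w_xx_def w_zz_def)

lemma adm_mk:
  assumes "admissible q"
  shows "q = mk (hh q) (uu q) (sig_xx q) (sig_zz q)"
proof -
  obtain a b c d where q: "q = (a,b,c,d)" by (cases q) auto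
  have "a \<noteq> 0" using assms q by (auto simp: admissible_def hh_def)
  then show ?thesis using q by (simp add: mk_def hh_def uu_def sig_xx_def sig_zz_def)
qed

lemma adm_pos:
  assumes "admissible q"
  shows "hh q > 0" "sig_xx q > 0" "sig_zz q > 0"
  using assms by (auto simp: admissible_def)

lemma h2dPdh:
  assumes "admissible q" "h > 0"
  shows "h^2 * dPdh g eta lam h (s_xx q) (s_zz q)
     = g*h^3 + eta/(2*lam) * (3*h^4*sig_zz q/(hh q)^2 + sig_xx q * (hh q)^2)"
proof -
  have p: "hh q > 0" "sig_xx q > 0" "sig_zz q > 0" using adm_pos[OF assms(1)] by auto
  have a: "(s_zz q)^2 = sig_zz q / (hh q)^2" using p
    by (simp add: s_zz_def power_divide)
  have b: "1/(s_xx q)^2 = sig_xx q * (hh q)^2" using p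
    by (simp add: s_xx_def power_mult_distrib power_divide)
  have "h^2 * dPdh g eta lam h (s_xx q) (s_zz q)
      = g*h^3 + eta/(2*lam) * (3*h^4*(s_zz q)^2 + 1/(s_xx q)^2)"
    using assms(2) by (simp add: dPdh_def field_simps power2_eq_square power3_eq_cube power4_eq_xxxx)
  then show ?thesis unfolding a b by simp
qed

lemma a_sq:
  assumes "admissible q" "g > 0" "eta > 0" "lam > 0"
  shows "(hh q * a_of g eta lam q)^2 = g*(hh q)^3 + eta/(2*lam) * (3*(hh q)^2*sig_zz q + sig_xx q * (hh q)^2)"
    and "a_of g eta lam q > 0"
proof -
  have p: "hh q > 0" "sig_xx q > 0" "sig_zz q > 0" using adm_pos[OF assms(1)] by auto
  have e: "(hh q)^2 * dPdh g eta lam (hh q) (s_xx q) (s_zz q) = g*(hh q)^3 + eta/(2*lam) * (3*(hh q)^2*sig_zz q + sig_xx q * (hh q)^2)"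
    using h2dPdh[OF assms(1) p(1), of g eta lam] p by (simp add: power2_eq_square power4_eq_xxxx)
  have pos: "dPdh g eta lam (hh q) (s_xx q) (s_zz q) > 0"
  proof -
    have "(hh q)^2 * dPdh g eta lam (hh q) (s_xx q) (s_zz q) > 0" unfolding e
      using p assms by (intro add_pos_pos mult_pos_pos) auto
    then show ?thesis using p by (simp add: zero_less_mult_iff)
  qed
  show "(hh q * a_of g eta lam q)^2 = g*(hh q)^3 + eta/(2*lam) * (3*(hh q)^2*sig_zz q + sig_xx q * (hh q)^2)"
    using pos e by (simp add: a_of_def power_mult_distrib)
  show "a_of g eta lam q > 0" using pos by (simp add: a_of_def)
qed



lemma speed_abs:
  fixes a b hl X Y cl cr N :: real
  assumes a: "a>0" and b: "b>0" and hl: "hl>0" and X: "X\<ge>0" and Y: "Y\<ge>0"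
    and cl: "cl = a + 2*hl*(X + Y/(a+b))" and cr: "cr \<ge> b" and N: "N \<le> cr*X + Y"
  shows "1 - hl*N/(cl*(cl+cr)) \<ge> 1/2" "cl*(1 - hl*N/(cl*(cl+cr)))^2 \<ge> a" "cl \<ge> a"
proof -
  define W where "W = X + Y/(a+b)"
  have W0: "W \<ge> 0" using X Y a b unfolding W_def by simp
  have cla: "cl \<ge> a" using cl hl W0 unfolding W_def[symmetric] by simp
  then show "cl \<ge> a" .
  have clp: "cl > 0" using cla a by simp
  have s: "cl + cr \<ge> a + b" using cla cr by simp
  have "Y \<le> Y/(a+b)*(cl+cr)"
  proof -
    have "Y = Y/(a+b)*(a+b)" using a b by simp
    also have "\<dots> \<le> Y/(a+b)*(cl+cr)" using s Y a b by (intro mult_left_mono) auto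
    finally show ?thesis .
  qed
  moreover have "cr*X \<le> (cl+cr)*X" using clp X by (intro mult_right_mono) auto
  ultimately have NW: "N \<le> W*(cl+cr)" using N unfolding W_def by (simp add: algebra_simps)
  have "hl*N/(cl*(cl+cr)) \<le> hl*(W*(cl+cr))/(cl*(cl+cr))"
    using NW hl clp s a b by (intro divide_right_mono mult_left_mono) auto
  also have "\<dots> = hl*W/cl"
  proof -
    have "cl+cr > 0" using s a b by simp
    then have "cl*(cl+cr) \<noteq> 0" using clp by simp
    then show ?thesis using clp by (simp add: divide_eq_eq)
  qed
  finally have t1: "1 - hl*N/(cl*(cl+cr)) \<ge> 1 - hl*W/cl" by simp
  have eq: "1 - hl*W/cl = (cl+a)/(2*cl)" using clp cl unfolding W_def[symmetric]
    by (simp add: field_simps)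
  have h: "(cl+a)/(2*cl) \<ge> 1/2" using clp a by (simp add: field_simps)
  show "1 - hl*N/(cl*(cl+cr)) \<ge> 1/2" using t1 eq h by linarith
  have "cl*((cl+a)/(2*cl))^2 \<le> cl*(1 - hl*N/(cl*(cl+cr)))^2"
    using t1 eq h clp by (intro mult_left_mono power_mono) auto
  moreover have "cl*((cl+a)/(2*cl))^2 \<ge> a"
  proof -
    have "cl*((cl+a)/(2*cl))^2 = (cl+a)^2/(4*cl)" using clp by (simp add: power2_eq_square field_simps)
    moreover have "(cl+a)^2 \<ge> 4*cl*a" using sum_squares_ge_zero[of "cl-a" 0]
      by (simp add: power2_eq_square algebra_simps)
    moreover have "4*cl > 0" using clp by simp
    ultimately show ?thesis by (simp add: pos_le_divide_eq mult.commute)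
  qed
  ultimately show "cl*(1 - hl*N/(cl*(cl+cr)))^2 \<ge> a" by simp
qed

lemma fbound:
  fixes g k h h0 M sx sz :: real
  assumes "g>0" "k>0" "h>0" "h0>0" "sx>0" "sz>0" "M\<ge>1" "h \<le> M*h0"
  shows "g*h^3 + k*(3*h^4*sz/h0^2 + sx*h0^2) \<le> M^4 * (g*h0^3 + k*(3*h0^2*sz + sx*h0^2))"
proof -
  have "h^3 \<le> (M*h0)^3" using assms by (intro power_mono) auto
  also have "\<dots> = M^3*h0^3" by (simp add: power_mult_distrib)
  also have "\<dots> \<le> M^4*h0^3" using assms by (intro mult_right_mono power_increasing) auto
  finally have c3: "h^3 \<le> M^4*h0^3" .
  have "h^4 \<le> (M*h0)^4" using assms by (intro power_mono) auto
  then have c4: "h^4 \<le> M^4*h0^4" by (simp add: power_mult_distrib)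
  have m4: "1 \<le> M^4" using assms by simp
  have "3*h^4*sz/h0^2 \<le> 3*(M^4*h0^4)*sz/h0^2" using c4 assms by (intro divide_right_mono mult_right_mono) auto
  also have "\<dots> = M^4*(3*h0^2*sz)" using assms by (simp add: field_simps power2_eq_square power4_eq_xxxx)
  finally have t1: "3*h^4*sz/h0^2 \<le> M^4*(3*h0^2*sz)" .
  have t2: "sx*h0^2 \<le> M^4*(sx*h0^2)" using m4 assms by simp
  have "g*h^3 \<le> g*(M^4*h0^3)" using c3 assms by simp
  moreover have "k*(3*h^4*sz/h0^2 + sx*h0^2) \<le> k*(M^4*(3*h0^2*sz) + M^4*(sx*h0^2))"
    using t1 t2 assms by (intro mult_left_mono add_mono) auto
  ultimately show ?thesis by (simp add: algebra_simps)
qed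



lemma helper_inv: "(h::real) \<noteq> 0 \<Longrightarrow> h*(1/h + (-N)/D) = 1 - h*N/D"
  by (simp add: right_diff_distrib)

lemma speeds:
  assumes g: "g>0" and eta: "eta>0" and lam: "lam>0" and al: "admissible ql" and ar: "admissible qr"
  shows "c_l g eta lam ql qr \<ge> hh ql * a_of g eta lam ql"
    "hh ql * inv_hstar_l g eta lam ql qr \<ge> 1/2"
    "c_l g eta lam ql qr * (hh ql * inv_hstar_l g eta lam ql qr)^2 \<ge> hh ql * a_of g eta lam ql"
    "c_r g eta lam ql qr \<ge> hh qr * a_of g eta lam qr"
    "hh qr * inv_hstar_r g eta lam ql qr \<ge> 1/2"
    "c_r g eta lam ql qr * (hh qr * inv_hstar_r g eta lam ql qr)^2 \<ge> hh qr * a_of g eta lam qr"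
proof -
  define hl hr where "hl = hh ql" and "hr = hh qr"
  define a b where "a = hh ql * a_of g eta lam ql" and "b = hh qr * a_of g eta lam qr"
  define X where "X = max 0 (uu ql - uu qr)"
  define Pl Pr where "Pl = Pres g eta lam ql" and "Pr = Pres g eta lam qr"
  define Yl Yr where "Yl = max 0 (Pr - Pl)" and "Yr = max 0 (Pl - Pr)"
  define cl cr where "cl = c_l g eta lam ql qr" and "cr = c_r g eta lam ql qr"
  have hl: "hl > 0" and hr: "hr > 0" using al ar unfolding hl_def hr_def admissible_def by auto
  have apos: "a > 0" "b > 0" using a_sq(2)[OF al g eta lam] a_sq(2)[OF ar g eta lam] hl hr
    unfolding a_def b_def hl_def hr_def by auto
  have X0: "X \<ge> 0" "X \<ge> uu ql - uu qr" unfolding X_def by auto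
  have Y0: "Yl \<ge> 0" "Yr \<ge> 0" "Yl \<ge> Pr - Pl" "Yr \<ge> Pl - Pr" unfolding Yl_def Yr_def by auto
  have cl: "cl = a + 2*hl*(X + Yl/(a+b))"
    unfolding cl_def c_l_def a_def b_def X_def Yl_def Pl_def Pr_def hl_def by (simp add: algebra_simps)
  have cr: "cr = b + 2*hr*(X + Yr/(b+a))"
    unfolding cr_def c_r_def a_def b_def X_def Yr_def Pl_def Pr_def hr_def by (simp add: algebra_simps)
  have W: "X + Yl/(a+b) \<ge> 0" "X + Yr/(b+a) \<ge> 0" using X0 Y0 apos by auto
  have crb: "cr \<ge> b" using cr hr W by simp
  have cla: "cl \<ge> a" using cl hl W by simp
  have clp: "cl > 0" "cr > 0" using cla crb apos by auto
  have N1: "cr*(uu ql - uu qr) + Pr - Pl \<le> cr*X + Yl"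
    using mult_left_mono[OF X0(2), of cr] clp Y0 by linarith
  have N2: "cl*(uu ql - uu qr) + Pl - Pr \<le> cl*X + Yr"
    using mult_left_mono[OF X0(2), of cl] clp Y0 by linarith
  have il: "hl * inv_hstar_l g eta lam ql qr = 1 - hl*(cr*(uu ql - uu qr) + Pr - Pl)/(cl*(cl+cr))"
    unfolding inv_hstar_l_def Let_def cl_def[symmetric] cr_def[symmetric] Pl_def[symmetric] Pr_def[symmetric]
      hl_def[symmetric]
  proof -
    have e: "cr*(uu qr - uu ql) + Pl - Pr = -(cr*(uu ql - uu qr) + Pr - Pl)" by (simp add: algebra_simps)
    show "hl * (1 / hl + (cr * (uu qr - uu ql) + Pl - Pr) / (cl * (cl + cr))) = 1 - hl*(cr*(uu ql - uu qr) + Pr - Pl)/(cl*(cl+cr))"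
      unfolding e by (rule helper_inv) (use hl in simp)
  qed
  have ir: "hr * inv_hstar_r g eta lam ql qr = 1 - hr*(cl*(uu ql - uu qr) + Pl - Pr)/(cr*(cr+cl))"
    unfolding inv_hstar_r_def Let_def cl_def[symmetric] cr_def[symmetric] Pl_def[symmetric] Pr_def[symmetric]
      hr_def[symmetric]
  proof -
    have e: "cl*(uu qr - uu ql) + Pr - Pl = -(cl*(uu ql - uu qr) + Pl - Pr)" by (simp add: algebra_simps)
    show "hr * (1 / hr + (cl * (uu qr - uu ql) + Pr - Pl) / (cr * (cl + cr))) = 1 - hr*(cl*(uu ql - uu qr) + Pl - Pr)/(cr*(cr+cl))"
      unfolding e add.commute[of cr cl] by (rule helper_inv) (use hr in simp)
  qed
  note L = speed_abs[OF apos(1) apos(2) hl X0(1) Y0(1) cl crb N1]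
  note R = speed_abs[OF apos(2) apos(1) hr X0(1) Y0(2) cr cla N2]
  show "c_l g eta lam ql qr \<ge> hh ql * a_of g eta lam ql" using cla unfolding cl_def a_def .
  show "hh ql * inv_hstar_l g eta lam ql qr \<ge> 1/2" using L(1) il unfolding hl_def by simp
  show "c_l g eta lam ql qr * (hh ql * inv_hstar_l g eta lam ql qr)^2 \<ge> hh ql * a_of g eta lam ql"
    using L(2) il unfolding hl_def cl_def a_def by simp
  show "c_r g eta lam ql qr \<ge> hh qr * a_of g eta lam qr" using crb unfolding cr_def b_def .
  show "hh qr * inv_hstar_r g eta lam ql qr \<ge> 1/2" using R(1) ir unfolding hr_def by simp
  show "c_r g eta lam ql qr * (hh qr * inv_hstar_r g eta lam ql qr)^2 \<ge> hh qr * a_of g eta lam qr"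
    using R(2) ir unfolding hr_def cr_def b_def by simp
qed

lemma subchar:
  assumes g: "g>0" and eta: "eta>0" and lam: "lam>0" and adm: "admissible q0"
    and ca: "c \<ge> hh q0 * a_of g eta lam q0" and iv: "iv > 0"
    and ct: "c * (hh q0 * iv)^2 \<ge> hh q0 * a_of g eta lam q0"
    and h: "h \<in> between (hh q0) (1/iv)"
  shows "h^2 * dPdh g eta lam h (s_xx q0) (s_zz q0) \<le> c^2"
proof -
  define h0 where "h0 = hh q0"
  define a where "a = hh q0 * a_of g eta lam q0"
  have h0: "h0 > 0" using adm unfolding h0_def admissible_def by auto
  have sp: "sig_xx q0 > 0" "sig_zz q0 > 0" using adm_pos[OF adm] by auto
  have a0: "a > 0" using a_sq(2)[OF adm g eta lam] h0 unfolding a_def h0_def by simp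
  define M where "M = max 1 (1/(h0*iv))"
  have M1: "M \<ge> 1" unfolding M_def by simp
  have "min h0 (1/iv) > 0" using iv h0 by simp
  moreover have "min h0 (1/iv) \<le> h" using h unfolding between_def h0_def by auto
  ultimately have hpos: "h > 0" by linarith
  have "h \<le> max h0 (1/iv)" using h unfolding between_def h0_def by auto
  also have "\<dots> \<le> M*h0" unfolding M_def using h0 iv
    by (auto simp: max_def field_simps)
  finally have hM: "h \<le> M*h0" .
  have cM: "c \<ge> M^2 * a"
  proof (cases "1/(h0*iv) \<le> 1")
    case True then have "M = 1" unfolding M_def by simp
    then show ?thesis using ca unfolding a_def by simp
  next
    case False then have M: "M = 1/(h0*iv)" unfolding M_def by simp
    have "M^2*a = a/(h0*iv)^2" unfolding M by (simp add: power_divide)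
    also have "\<dots> \<le> c" using ct h0 iv unfolding a_def h0_def by (simp add: divide_le_eq)
    finally show ?thesis .
  qed
  have "h^2 * dPdh g eta lam h (s_xx q0) (s_zz q0)
      = g*h^3 + eta/(2*lam) * (3*h^4*sig_zz q0/h0^2 + sig_xx q0 * h0^2)"
    using h2dPdh[OF adm hpos] unfolding h0_def .
  also have "\<dots> \<le> M^4 * (g*h0^3 + eta/(2*lam)*(3*h0^2*sig_zz q0 + sig_xx q0*h0^2))"
    using fbound[OF g _ hpos h0 sp(1) sp(2) M1 hM, of "eta/(2*lam)"] eta lam by simp
  also have "\<dots> = (M^2*a)^2" using a_sq(1)[OF adm g eta lam] unfolding a_def h0_def
    by (simp add: power_mult_distrib power2_eq_square power4_eq_xxxx)
  also have "\<dots> \<le> c^2" using cM a0 M1 by (intro power_mono) auto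
  finally show ?thesis .
qed


lemma alg_ids:
  fixes cl cr ul ur Pl Pr :: real assumes "cl>0" "cr>0"
  shows "(cl*ul + cr*ur + Pl - Pr)/(cl+cr) = ul + cl*((cr*(ur-ul)+Pl-Pr)/(cl*(cl+cr)))"
    "(cr*Pl + cl*Pr - cl*cr*(ur-ul))/(cl+cr) = Pl - cl^2*((cr*(ur-ul)+Pl-Pr)/(cl*(cl+cr)))"
    "(cl*ul + cr*ur + Pl - Pr)/(cl+cr) = ur + (-cr)*((cl*(ur-ul)+Pr-Pl)/(cr*(cl+cr)))"
    "(cr*Pl + cl*Pr - cl*cr*(ur-ul))/(cl+cr) = Pr - (-cr)^2*((cl*(ur-ul)+Pr-Pl)/(cr*(cl+cr)))"
proof -
  have s: "cl+cr > 0" using assms by simp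
  have a: "cl*((cr*(ur-ul)+Pl-Pr)/(cl*(cl+cr))) = (cr*(ur-ul)+Pl-Pr)/(cl+cr)" using assms by simp
  have b: "cl^2*((cr*(ur-ul)+Pl-Pr)/(cl*(cl+cr))) = cl*(cr*(ur-ul)+Pl-Pr)/(cl+cr)" using assms
    by (simp add: power2_eq_square)
  have c: "(-cr)*((cl*(ur-ul)+Pr-Pl)/(cr*(cl+cr))) = -((cl*(ur-ul)+Pr-Pl)/(cl+cr))" using assms by simp
  have d: "(-cr)^2*((cl*(ur-ul)+Pr-Pl)/(cr*(cl+cr))) = cr*(cl*(ur-ul)+Pr-Pl)/(cl+cr)" using assms
    by (simp add: power2_eq_square)
  show "(cl*ul + cr*ur + Pl - Pr)/(cl+cr) = ul + cl*((cr*(ur-ul)+Pl-Pr)/(cl*(cl+cr)))"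
    unfolding a using s by (simp add: field_simps)
  show "(cr*Pl + cl*Pr - cl*cr*(ur-ul))/(cl+cr) = Pl - cl^2*((cr*(ur-ul)+Pl-Pr)/(cl*(cl+cr)))"
    unfolding b using s by (simp add: field_simps)
  show "(cl*ul + cr*ur + Pl - Pr)/(cl+cr) = ur + (-cr)*((cl*(ur-ul)+Pr-Pl)/(cr*(cl+cr)))"
    unfolding c using s by (simp add: field_simps)
  show "(cr*Pl + cl*Pr - cl*cr*(ur-ul))/(cl+cr) = Pr - (-cr)^2*((cl*(ur-ul)+Pr-Pl)/(cr*(cl+cr)))"
    unfolding d using s by (simp add: field_simps)
qed



lemma Qbound:
  fixes g K h0 h1 sx sz :: real
  assumes "g>0" "K>0" "h0>0" "h1>0" "sx>0" "sz>0"
  shows "g*h0^2*h1 + K*sx*h0^2 + K*sz*(h1^2+2*h0*h1)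
     \<le> g*(max h0 h1)^3 + K*(3*(max h0 h1)^4*sz/h0^2 + sx*h0^2)"
proof -
  define m where "m = max h0 h1"
  have m: "h0 \<le> m" "h1 \<le> m" "m > 0" using assms unfolding m_def by auto
  have "h0^2*h1 \<le> m^2*m" using m assms by (intro mult_mono power_mono) auto
  then have a1: "g*(h0^2*h1) \<le> g*m^3" using assms by (simp add: power3_eq_cube power2_eq_square)
  have b1: "h0^2*h1^2 \<le> m^2*m^2" using m assms by (intro mult_mono power_mono) auto
  have b2: "h0^3*h1 \<le> m^3*m" using m assms by (intro mult_mono power_mono) auto
  have "h0^2*(h1^2+2*h0*h1) = h0^2*h1^2 + 2*(h0^3*h1)" by (simp add: algebra_simps power2_eq_square power3_eq_cube)
  also have "\<dots> \<le> m^2*m^2 + 2*(m^3*m)" using b1 b2 by simp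
  also have "\<dots> = 3*m^4" by (simp add: power2_eq_square power3_eq_cube power4_eq_xxxx)
  finally have "h0^2*(h1^2+2*h0*h1) \<le> 3*m^4" .
  then have "(h1^2+2*h0*h1) \<le> 3*m^4/h0^2" using assms by (simp add: field_simps)
  then have "K*sz*(h1^2+2*h0*h1) \<le> K*sz*(3*m^4/h0^2)" using assms by (intro mult_left_mono) auto
  then show ?thesis using a1 unfolding m_def[symmetric] by (simp add: algebra_simps)
qed

lemma energy_mk:
  "h \<noteq> 0 \<Longrightarrow> Energy g eta lam (mk h u sx sz) = h*u^2/2 + g*h^2/2 + eta/(4*lam)*h*(sx+sz-ln(sx*sz)-2)"
  by (simp add: Energy_def mk_simps)

lemma pres_mk:
  "h \<noteq> 0 \<Longrightarrow> Pres g eta lam (mk h u sx sz) = g*h^2/2 + 2*(eta/(4*lam))*h*(sz-sx)"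
  by (simp add: Pres_def mk_simps)

lemma wave_state:
  fixes j :: real
  assumes adm: "admissible q0" and h1: "h1 > 0"
  defines "h0 \<equiv> hh q0"
  defines "d \<equiv> 1/h1 - 1/h0"
  defines "q1 \<equiv> mk h1 (uu q0 + j*d) (sig_xx q0 * (h0/h1)^2) (sig_zz q0 * (h1/h0)^2)"
  shows "(uu q0 - j/h0) * (Energy g eta lam q1 - Energy g eta lam q0)
      - ((Energy g eta lam q1 + (Pres g eta lam q0 - j^2*d)) * (uu q0 + j*d)
         - (Energy g eta lam q0 + Pres g eta lam q0) * uu q0)
     = j*d^2/2 * (j^2 - (g*h0^2*h1 + 2*(eta/(4*lam))*sig_xx q0*h0^2 + 2*(eta/(4*lam))*sig_zz q0*(h1^2+2*h0*h1)))"
proof -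
  have h0: "h0 > 0" and sp: "sig_xx q0 > 0" "sig_zz q0 > 0" using adm_pos[OF adm] unfolding h0_def by auto
  have q0: "q0 = mk h0 (uu q0) (sig_xx q0) (sig_zz q0)" using adm_mk[OF adm] unfolding h0_def .
  have prod: "sig_xx q0 * (h0/h1)^2 * (sig_zz q0 * (h1/h0)^2) = sig_xx q0 * sig_zz q0"
    using h0 h1 by (simp add: power_divide field_simps)
  have E1: "Energy g eta lam q1 = h1*(uu q0 + j*d)^2/2 + g*h1^2/2 + (eta/(4*lam))*h1*(sig_xx q0*h0^2/h1^2 + sig_zz q0*h1^2/h0^2 - ln (sig_xx q0 * sig_zz q0) - 2)"
  proof -
    have "h1 \<noteq> 0" using h1 by simp
    then show ?thesis unfolding q1_def energy_mk[OF \<open>h1 \<noteq> 0\<close>] prod by (simp add: power_divide)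
  qed
  have E0: "Energy g eta lam q0 = h0*(uu q0)^2/2 + g*h0^2/2 + (eta/(4*lam))*h0*(sig_xx q0+sig_zz q0 - ln (sig_xx q0 * sig_zz q0) - 2)"
    using energy_mk[of h0 g eta lam "uu q0" "sig_xx q0" "sig_zz q0"] h0 q0 by simp
  have P0: "Pres g eta lam q0 = g*h0^2/2 + 2*(eta/(4*lam))*h0*(sig_zz q0 - sig_xx q0)"
    using pres_mk[of h0 g eta lam "uu q0" "sig_xx q0" "sig_zz q0"] h0 q0 by simp
  show ?thesis unfolding E1 E0 P0 d_def
    using wave_id[OF h0 h1, of "uu q0" j g "eta/(4*lam)" "sig_xx q0" "sig_zz q0" "ln (sig_xx q0 * sig_zz q0)"]
    by simp
qed



lemma wave_facts:
  assumes g: "g>0" and eta: "eta>0" and lam: "lam>0" and al: "admissible ql" and ar: "admissible qr"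
  defines "cl \<equiv> c_l g eta lam ql qr" and "cr \<equiv> c_r g eta lam ql qr"
  defines "il \<equiv> inv_hstar_l g eta lam ql qr" and "ir \<equiv> inv_hstar_r g eta lam ql qr"
  defines "us \<equiv> ustar g eta lam ql qr" and "ps \<equiv> pistar g eta lam ql qr"
  shows "cl > 0" "cr > 0" "il > 0" "ir > 0"
    "us = uu ql + cl*(il - 1/hh ql)" "ps = Pres g eta lam ql - cl^2*(il - 1/hh ql)"
    "us = uu qr + (-cr)*(ir - 1/hh qr)" "ps = Pres g eta lam qr - (-cr)^2*(ir - 1/hh qr)"
    "Sigma1 g eta lam ql qr = uu ql - cl/hh ql" "Sigma3 g eta lam ql qr = uu qr - (-cr)/hh qr"
    "Sigma2 g eta lam ql qr = us"
    "Sigma2 g eta lam ql qr - Sigma1 g eta lam ql qr = cl*il"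
    "Sigma3 g eta lam ql qr - Sigma2 g eta lam ql qr = cr*ir"
    "hstar_l g eta lam ql qr = 1/il" "hstar_r g eta lam ql qr = 1/ir"
proof -
  note sp = speeds[OF g eta lam al ar]
  have hl: "hh ql > 0" and hr: "hh qr > 0" using al ar by (auto simp: admissible_def)
  have pa: "hh ql * a_of g eta lam ql > 0" "hh qr * a_of g eta lam qr > 0"
    using a_sq(2)[OF al g eta lam] a_sq(2)[OF ar g eta lam] hl hr by auto
  show clp: "cl > 0" "cr > 0" using sp(1) sp(4) pa unfolding cl_def cr_def by linarith+
  have "hh ql * il > 0" using sp(2) unfolding il_def by linarith
  then show ilp: "il > 0" using hl by (simp add: zero_less_mult_iff)
  have "hh qr * ir > 0" using sp(5) unfolding ir_def by linarith
  then show irp: "ir > 0" using hr by (simp add: zero_less_mult_iff)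
  define Pl Pr ul ur hl' hr' where "Pl = Pres g eta lam ql" and "Pr = Pres g eta lam qr"
    and "ul = uu ql" and "ur = uu qr" and "hl' = hh ql" and "hr' = hh qr"
  have s: "cl + cr > 0" using clp by simp
  have il: "il - 1/hl' = (cr*(ur-ul)+Pl-Pr)/(cl*(cl+cr))"
    unfolding il_def inv_hstar_l_def Let_def cl_def[symmetric] cr_def[symmetric] Pl_def Pr_def ul_def ur_def hl'_def
    by simp
  have ir: "ir - 1/hr' = (cl*(ur-ul)+Pr-Pl)/(cr*(cl+cr))"
    unfolding ir_def inv_hstar_r_def Let_def cl_def[symmetric] cr_def[symmetric] Pl_def Pr_def ul_def ur_def hr'_def
    by simp
  have u: "us = (cl*ul + cr*ur + Pl - Pr)/(cl+cr)"
    unfolding us_def ustar_def Let_def cl_def[symmetric] cr_def[symmetric] Pl_def Pr_def ul_def ur_def by simp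
  have p: "ps = (cr*Pl + cl*Pr - cl*cr*(ur-ul))/(cl+cr)"
    unfolding ps_def pistar_def Let_def cl_def[symmetric] cr_def[symmetric] Pl_def Pr_def ul_def ur_def by simp
  note ids = alg_ids[OF clp, where ul=ul and ur=ur and Pl=Pl and Pr=Pr]
  show u1: "us = uu ql + cl*(il - 1/hh ql)"
    unfolding il[unfolded hl'_def] u ul_def[symmetric] using ids(1) by simp
  show "ps = Pres g eta lam ql - cl^2*(il - 1/hh ql)"
    unfolding il[unfolded hl'_def] p Pl_def[symmetric] using ids(2) by simp
  show u3: "us = uu qr + (-cr)*(ir - 1/hh qr)"
    unfolding ir[unfolded hr'_def] u ur_def[symmetric] using ids(3) by simp
  show "ps = Pres g eta lam qr - (-cr)^2*(ir - 1/hh qr)"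
    unfolding ir[unfolded hr'_def] p Pr_def[symmetric] using ids(4) by simp
  show "Sigma1 g eta lam ql qr = uu ql - cl/hh ql" unfolding Sigma1_def cl_def ..
  show "Sigma3 g eta lam ql qr = uu qr - (-cr)/hh qr" unfolding Sigma3_def cr_def by simp
  show "Sigma2 g eta lam ql qr = us" unfolding Sigma2_def us_def ..
  show "Sigma2 g eta lam ql qr - Sigma1 g eta lam ql qr = cl*il"
    unfolding Sigma2_def Sigma1_def us_def[symmetric] cl_def[symmetric] u1 by (simp add: algebra_simps)
  show "Sigma3 g eta lam ql qr - Sigma2 g eta lam ql qr = cr*ir"
    unfolding Sigma3_def Sigma2_def us_def[symmetric] cr_def[symmetric] u3 by (simp add: algebra_simps)
  show "hstar_l g eta lam ql qr = 1/il" unfolding hstar_l_def il_def ..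
  show "hstar_r g eta lam ql qr = 1/ir" unfolding hstar_r_def ir_def ..
qed



lemma qstar_l_mk: "qstar_l g eta lam ql qr = mk (hstar_l g eta lam ql qr) (ustar g eta lam ql qr)
   (sig_xx ql * (hh ql / hstar_l g eta lam ql qr)^2) (sig_zz ql * (hstar_l g eta lam ql qr / hh ql)^2)"
  unfolding qstar_l_def Let_def mk_def ..
lemma qstar_r_mk: "qstar_r g eta lam ql qr = mk (hstar_r g eta lam ql qr) (ustar g eta lam ql qr)
   (sig_xx qr * (hh qr / hstar_r g eta lam ql qr)^2) (sig_zz qr * (hstar_r g eta lam ql qr / hh qr)^2)"
  unfolding qstar_r_def Let_def mk_def ..

lemma adm_mk_pos: "h>0 \<Longrightarrow> sx>0 \<Longrightarrow> sz>0 \<Longrightarrow> admissible (mk h u sx sz)"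
  by (simp add: admissible_def mk_simps)

lemma wave_energy:
  assumes g: "g>0" and eta: "eta>0" and lam: "lam>0" and adm: "admissible q0"
    and ca: "c \<ge> hh q0 * a_of g eta lam q0" and iv: "iv > 0"
    and ct: "c * (hh q0 * iv)^2 \<ge> hh q0 * a_of g eta lam q0"
    and j: "j = c \<or> j = -c"
  defines "q1 \<equiv> mk (1/iv) (uu q0 + j*(iv - 1/hh q0)) (sig_xx q0 * (hh q0/(1/iv))^2) (sig_zz q0 * ((1/iv)/hh q0)^2)"
  shows "j * ((uu q0 - j/hh q0) * (Energy g eta lam q1 - Energy g eta lam q0)
      - ((Energy g eta lam q1 + (Pres g eta lam q0 - j^2*(iv - 1/hh q0))) * (uu q0 + j*(iv - 1/hh q0))
         - (Energy g eta lam q0 + Pres g eta lam q0) * uu q0)) \<ge> 0"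
proof -
  define h0 h1 where "h0 = hh q0" and "h1 = 1/iv"
  have h0: "h0 > 0" and sp: "sig_xx q0 > 0" "sig_zz q0 > 0" using adm_pos[OF adm] unfolding h0_def by auto
  have h1: "h1 > 0" using iv unfolding h1_def by simp
  have d: "iv - 1/hh q0 = 1/h1 - 1/h0" unfolding h0_def h1_def by simp
  have k: "eta/(4*lam) > 0" "2*(eta/(4*lam)) = eta/(2*lam)" using eta lam by auto
  have W: "(uu q0 - j/hh q0) * (Energy g eta lam q1 - Energy g eta lam q0)
      - ((Energy g eta lam q1 + (Pres g eta lam q0 - j^2*(iv - 1/hh q0))) * (uu q0 + j*(iv - 1/hh q0))
         - (Energy g eta lam q0 + Pres g eta lam q0) * uu q0)
     = j*(1/h1 - 1/h0)^2/2 * (j^2 - (g*h0^2*h1 + 2*(eta/(4*lam))*sig_xx q0*h0^2 + 2*(eta/(4*lam))*sig_zz q0*(h1^2+2*h0*h1)))"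
    unfolding q1_def d using wave_state[OF adm h1, of j g eta lam] unfolding h0_def h1_def by simp
  define hm where "hm = max h0 h1"
  have hmpos: "hm > 0" using h0 unfolding hm_def by simp
  have "g*h0^2*h1 + 2*(eta/(4*lam))*sig_xx q0*h0^2 + 2*(eta/(4*lam))*sig_zz q0*(h1^2+2*h0*h1)
      \<le> g*hm^3 + (eta/(2*lam))*(3*hm^4*sig_zz q0/h0^2 + sig_xx q0*h0^2)"
    using Qbound[OF g _ h0 h1 sp, of "eta/(2*lam)"] k eta lam unfolding hm_def by (simp add: mult.assoc)
  also have "\<dots> = hm^2 * dPdh g eta lam hm (s_xx q0) (s_zz q0)"
    using h2dPdh[OF adm hmpos, of g eta lam] unfolding h0_def by simp
  also have "\<dots> \<le> c^2"
    using subchar[OF g eta lam adm ca iv ct] unfolding between_def hm_def h0_def h1_def by auto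
  also have "\<dots> = j^2" using j by auto
  finally have Q: "g*h0^2*h1 + 2*(eta/(4*lam))*sig_xx q0*h0^2 + 2*(eta/(4*lam))*sig_zz q0*(h1^2+2*h0*h1) \<le> j^2" .
  have "j * (j*(1/h1 - 1/h0)^2/2 * (j^2 - (g*h0^2*h1 + 2*(eta/(4*lam))*sig_xx q0*h0^2 + 2*(eta/(4*lam))*sig_zz q0*(h1^2+2*h0*h1))))
       = (j^2 * (1/h1 - 1/h0)^2/2) * (j^2 - (g*h0^2*h1 + 2*(eta/(4*lam))*sig_xx q0*h0^2 + 2*(eta/(4*lam))*sig_zz q0*(h1^2+2*h0*h1)))"
    by (simp add: power2_eq_square)
  also have "\<dots> \<ge> 0" using Q by (intro mult_nonneg_nonneg) auto
  finally show ?thesis unfolding W .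
qed

lemma rh:
  fixes h0 u0 h1 u1 S j p0 p1 :: real
  assumes "h0*(u0-S) = j" "h1*(u1-S) = j" "p1 = p0 - j*(u1-u0)"
  shows "S*(h1-h0) = h1*u1 - h0*u0" "S*(h1*u1 - h0*u0) = (h1*u1^2+p1) - (h0*u0^2+p0)"
proof -
  show "S*(h1-h0) = h1*u1 - h0*u0" using assms(1,2) by (simp add: algebra_simps)
  have "h1*u1^2 - S*(h1*u1) = u1*(h1*(u1-S))" by (simp add: algebra_simps power2_eq_square)
  then have "h1*u1^2 - S*(h1*u1) = j*u1" using assms(2) by simp
  moreover have "h0*u0^2 - S*(h0*u0) = u0*(h0*(u0-S))" by (simp add: algebra_simps power2_eq_square)
  then have "h0*u0^2 - S*(h0*u0) = j*u0" using assms(1) by simp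
  ultimately show "S*(h1*u1 - h0*u0) = (h1*u1^2+p1) - (h0*u0^2+p0)" using assms(3)
    by (simp add: algebra_simps)
qed

lemma riemann:
  assumes g: "g>0" and eta: "eta>0" and lam: "lam>0" and al: "admissible ql" and ar: "admissible qr"
  defines "S1 \<equiv> Sigma1 g eta lam ql qr" and "S2 \<equiv> Sigma2 g eta lam ql qr" and "S3 \<equiv> Sigma3 g eta lam ql qr"
  defines "y1 \<equiv> qstar_l g eta lam ql qr" and "y2 \<equiv> qstar_r g eta lam ql qr"
  defines "ps \<equiv> pistar g eta lam ql qr"
  shows "S1 < S2" "S2 < S3" "admissible y1" "admissible y2"
    "Gflux g eta lam ql - Gflux g eta lam qr + S1*(Energy g eta lam y1 - Energy g eta lam ql)
      + S2*(Energy g eta lam y2 - Energy g eta lam y1) + S3*(Energy g eta lam qr - Energy g eta lam y2) \<ge> 0"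
    "S1*(hh y1 - hh ql) = hh y1*uu y1 - hh ql*uu ql"
    "S1*(hh y1*uu y1 - hh ql*uu ql) = (hh y1*(uu y1)^2 + ps) - (hh ql*(uu ql)^2 + Pres g eta lam ql)"
    "S2*(hh y2 - hh y1) = hh y2*uu y2 - hh y1*uu y1"
    "S2*(hh y2*uu y2 - hh y1*uu y1) = (hh y2*(uu y2)^2 + ps) - (hh y1*(uu y1)^2 + ps)"
    "S3*(hh qr - hh y2) = hh qr*uu qr - hh y2*uu y2"
    "S3*(hh qr*uu qr - hh y2*uu y2) = (hh qr*(uu qr)^2 + Pres g eta lam qr) - (hh y2*(uu y2)^2 + ps)"
    "fst (snd y1) = hh y1 * uu y1" "fst (snd y2) = hh y2 * uu y2"
    "fst (snd ql) = hh ql * uu ql" "fst (snd qr) = hh qr * uu qr"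
proof -
  note wf = wave_facts[OF g eta lam al ar]
  note sp = speeds[OF g eta lam al ar]
  define cl cr il ir us where "cl = c_l g eta lam ql qr" and "cr = c_r g eta lam ql qr"
    and "il = inv_hstar_l g eta lam ql qr" and "ir = inv_hstar_r g eta lam ql qr"
    and "us = ustar g eta lam ql qr"
  note wf = wf[folded cl_def cr_def il_def ir_def us_def ps_def, folded S1_def S2_def S3_def]
  note sp = sp[folded cl_def cr_def il_def ir_def]
  have hl: "hh ql > 0" and hr: "hh qr > 0" using al ar by (auto simp: admissible_def)
  have sxl: "sig_xx ql > 0" "sig_zz ql > 0" "sig_xx qr > 0" "sig_zz qr > 0"
    using adm_pos[OF al] adm_pos[OF ar] by auto
  show "S1 < S2" using wf(12) mult_pos_pos[OF wf(1) wf(3)] by linarith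
  show "S2 < S3" using wf(13) mult_pos_pos[OF wf(2) wf(4)] by linarith
  have y1: "y1 = mk (1/il) us (sig_xx ql * (hh ql/(1/il))^2) (sig_zz ql * ((1/il)/hh ql)^2)"
    unfolding y1_def qstar_l_mk wf(14) us_def ..
  have y2: "y2 = mk (1/ir) us (sig_xx qr * (hh qr/(1/ir))^2) (sig_zz qr * ((1/ir)/hh qr)^2)"
    unfolding y2_def qstar_r_mk wf(15) us_def ..
  have ilne: "1/il \<noteq> 0" "1/ir \<noteq> 0" using wf(3) wf(4) by auto
  show ay1: "admissible y1" unfolding y1 using wf(3) hl sxl by (intro adm_mk_pos) auto
  show ay2: "admissible y2" unfolding y2 using wf(4) hr sxl by (intro adm_mk_pos) auto
  have hy: "hh y1 = 1/il" "uu y1 = us" "hh y2 = 1/ir" "uu y2 = us"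
    unfolding y1 y2 using ilne by (auto simp: mk_simps)
  show "fst (snd y1) = hh y1 * uu y1" "fst (snd y2) = hh y2 * uu y2"
    unfolding y1 y2 using ilne by (auto simp: mk_simps)
  show "fst (snd ql) = hh ql * uu ql" "fst (snd qr) = hh qr * uu qr"
    using hl hr by (auto simp: hh_def uu_def)
  have m1: "hh ql*(uu ql - S1) = cl" using wf(9) hl by (simp add: field_simps)
  have m2: "hh y1*(uu y1 - S1) = cl"
  proof -
    have "uu y1 - S1 = cl*il" using wf(12) wf(11) hy by simp
    then show ?thesis using hy wf(3) by simp
  qed
  have p1: "ps = Pres g eta lam ql - cl*(uu y1 - uu ql)" using wf(5) wf(6) hy
    by (simp add: power2_eq_square)
  note R1 = rh[OF m1 m2 p1]
  show "S1*(hh y1 - hh ql) = hh y1*uu y1 - hh ql*uu ql" by (rule R1(1))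
  show "S1*(hh y1*uu y1 - hh ql*uu ql) = (hh y1*(uu y1)^2 + ps) - (hh ql*(uu ql)^2 + Pres g eta lam ql)"
    by (rule R1(2))
  have c1: "hh y1*(uu y1 - S2) = 0" "hh y2*(uu y2 - S2) = 0" using hy wf(11) by auto
  have pp: "ps = ps - 0*(uu y2 - uu y1)" by simp
  note R2 = rh[OF c1(1) c1(2) pp]
  show "S2*(hh y2 - hh y1) = hh y2*uu y2 - hh y1*uu y1" by (rule R2(1))
  show "S2*(hh y2*uu y2 - hh y1*uu y1) = (hh y2*(uu y2)^2 + ps) - (hh y1*(uu y1)^2 + ps)"
    using R2(2) by simp
  have m3: "hh y2*(uu y2 - S3) = -cr"
  proof -
    have "uu y2 - S3 = -(cr*ir)" using wf(13) wf(11) hy by simp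
    then show ?thesis using hy wf(4) by simp
  qed
  have m4: "hh qr*(uu qr - S3) = -cr" using wf(10) hr by (simp add: field_simps)
  have p3: "Pres g eta lam qr = ps - (-cr)*(uu qr - uu y2)"
  proof -
    have a: "uu qr - us = cr*(ir - 1/hh qr)" using wf(7) by simp
    have b: "Pres g eta lam qr = ps + cr*(cr*(ir - 1/hh qr))" using wf(8) by (simp add: power2_eq_square)
    show ?thesis unfolding b a[symmetric] hy by simp
  qed
  note R3 = rh[OF m3 m4 p3]
  show "S3*(hh qr - hh y2) = hh qr*uu qr - hh y2*uu y2" by (rule R3(1))
  show "S3*(hh qr*uu qr - hh y2*uu y2) = (hh qr*(uu qr)^2 + Pres g eta lam qr) - (hh y2*(uu y2)^2 + ps)"
    by (rule R3(2))
  have WL: "cl * ((uu ql - cl/hh ql) * (Energy g eta lam y1 - Energy g eta lam ql)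
      - ((Energy g eta lam y1 + (Pres g eta lam ql - cl^2*(il - 1/hh ql))) * (uu ql + cl*(il - 1/hh ql))
         - (Energy g eta lam ql + Pres g eta lam ql) * uu ql)) \<ge> 0"
    using wave_energy[OF g eta lam al sp(1) wf(3) sp(3), of cl] unfolding y1 wf(5)[symmetric]
    by simp
  have WL': "S1 * (Energy g eta lam y1 - Energy g eta lam ql)
      - ((Energy g eta lam y1 + ps) * us - (Energy g eta lam ql + Pres g eta lam ql) * uu ql) \<ge> 0"
    using WL wf(1) unfolding wf(9)[symmetric] wf(6)[symmetric] wf(5)[symmetric]
    by (simp add: zero_le_mult_iff)
  have WR: "(-cr) * ((uu qr - (-cr)/hh qr) * (Energy g eta lam y2 - Energy g eta lam qr)
      - ((Energy g eta lam y2 + (Pres g eta lam qr - (-cr)^2*(ir - 1/hh qr))) * (uu qr + (-cr)*(ir - 1/hh qr))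
         - (Energy g eta lam qr + Pres g eta lam qr) * uu qr)) \<ge> 0"
    using wave_energy[OF g eta lam ar sp(4) wf(4) sp(6), of "-cr"] unfolding y2 wf(7)[symmetric]
    by simp
  have WR': "S3 * (Energy g eta lam y2 - Energy g eta lam qr)
      - ((Energy g eta lam y2 + ps) * us - (Energy g eta lam qr + Pres g eta lam qr) * uu qr) \<le> 0"
    using WR wf(2) unfolding wf(10)[symmetric] wf(8)[symmetric] wf(7)[symmetric]
    by (simp add: mult_le_0_iff)
  have eq: "Gflux g eta lam ql - Gflux g eta lam qr + S1*(Energy g eta lam y1 - Energy g eta lam ql)
      + S2*(Energy g eta lam y2 - Energy g eta lam y1) + S3*(Energy g eta lam qr - Energy g eta lam y2)
    = (S1 * (Energy g eta lam y1 - Energy g eta lam ql)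
      - ((Energy g eta lam y1 + ps) * us - (Energy g eta lam ql + Pres g eta lam ql) * uu ql))
    - (S3 * (Energy g eta lam y2 - Energy g eta lam qr)
      - ((Energy g eta lam y2 + ps) * us - (Energy g eta lam qr + Pres g eta lam qr) * uu qr))"
    unfolding Gflux_def wf(11) by (simp add: algebra_simps)
  show "Gflux g eta lam ql - Gflux g eta lam qr + S1*(Energy g eta lam y1 - Energy g eta lam ql)
      + S2*(Energy g eta lam y2 - Energy g eta lam y1) + S3*(Energy g eta lam qr - Energy g eta lam y2) \<ge> 0"
    unfolding eq using WL' WR' by linarith
qed



lemma grad_part:
  fixes k hx hy a b La Lb :: real
  assumes "b \<noteq> 0"
  shows "k*(hy*(a - La - 1)) - k*(hx*(b - Lb - 1)) - ((-k*Lb)*(hy-hx) + k*(1-1/b)*(hy*a - hx*b))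
     = k*hy*(a/b - 1 - (La - Lb))"
  using assms by (simp add: field_simps)

lemma grad_ineq:
  assumes ax: "admissible x" and ay: "admissible y" and eta: "eta>0" and lam: "lam>0" and g: "g > 0"
  shows "Energy g eta lam y \<ge> Energy g eta lam x
     + (g*hh x - (uu x)^2/2 - eta/(4*lam)*(ln (sig_xx x) + ln (sig_zz x))) * (fst y - fst x)
     + uu x * (fst (snd y) - fst (snd x))
     + eta/(4*lam)*(1 - 1/sig_xx x) * (w_xx y - w_xx x)
     + eta/(4*lam)*(1 - 1/sig_zz x) * (w_zz y - w_zz x)"
proof -
  define k where "k = eta/(4*lam)"
  have k: "k > 0" using eta lam unfolding k_def by simp
  obtain hx ux ax zx where X: "x = mk hx ux ax zx" and px: "hx>0" "ax>0" "zx>0"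
    using adm_mk[OF ax] adm_pos[OF ax] by blast
  obtain hy uy ay zy where Y: "y = mk hy uy ay zy" and py: "hy>0" "ay>0" "zy>0"
    using adm_mk[OF ay] adm_pos[OF ay] by blast
  have fx: "fst x = hx" "fst y = hy" unfolding X Y mk_def by simp_all
  have sx: "hh x = hx" "uu x = ux" "sig_xx x = ax" "sig_zz x = zx" "fst (snd x) = hx*ux" "w_xx x = hx*ax" "w_zz x = hx*zx"
    unfolding X using px by (simp_all add: mk_simps)
  have sy: "fst (snd y) = hy*uy" "w_xx y = hy*ay" "w_zz y = hy*zy"
    unfolding Y using py by (simp_all add: mk_simps)
  have Ex: "Energy g eta lam x = hx*ux^2/2 + g*hx^2/2 + k*(hx*(ax - ln ax - 1)) + k*(hx*(zx - ln zx - 1))"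
    unfolding X k_def using px lam by (simp add: energy_mk ln_mult field_simps)
  have Ey: "Energy g eta lam y = hy*uy^2/2 + g*hy^2/2 + k*(hy*(ay - ln ay - 1)) + k*(hy*(zy - ln zy - 1))"
    unfolding Y k_def using py lam by (simp add: energy_mk ln_mult field_simps)
  have T1: "hy*uy^2/2 - hx*ux^2/2 - ((0-ux^2/2)*(hy-hx) + ux*(hy*uy - hx*ux)) = hy*(uy-ux)^2/2"
    by (simp add: field_simps power2_eq_square)
  have T2: "g*hy^2/2 - g*hx^2/2 - g*hx*(hy - hx) = g*(hy-hx)^2/2"
    by (simp add: field_simps power2_eq_square)
  have Ta: "k*(hy*(ay - ln ay - 1)) - k*(hx*(ax - ln ax - 1)) - ((-k*ln ax)*(hy-hx) + k*(1-1/ax)*(hy*ay - hx*ax))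
     = k*hy*(ay/ax - 1 - (ln ay - ln ax))" using px by (intro grad_part) simp
  have Tz: "k*(hy*(zy - ln zy - 1)) - k*(hx*(zx - ln zx - 1)) - ((-k*ln zx)*(hy-hx) + k*(1-1/zx)*(hy*zy - hx*zx))
     = k*hy*(zy/zx - 1 - (ln zy - ln zx))" using px by (intro grad_part) simp
  have na: "ay/ax - 1 - (ln ay - ln ax) \<ge> 0"
    using ln_le_minus_one[of "ay/ax"] px py by (simp add: ln_div)
  have nz: "zy/zx - 1 - (ln zy - ln zx) \<ge> 0"
    using ln_le_minus_one[of "zy/zx"] px py by (simp add: ln_div)
  have pos: "hy*(uy-ux)^2/2 + g*(hy-hx)^2/2 + k*hy*(ay/ax - 1 - (ln ay - ln ax)) + k*hy*(zy/zx - 1 - (ln zy - ln zx)) \<ge> 0"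
    using na nz k py g by (intro add_nonneg_nonneg mult_nonneg_nonneg) auto
  have "Energy g eta lam y - (Energy g eta lam x
     + (g*hh x - (uu x)^2/2 - k*(ln (sig_xx x) + ln (sig_zz x))) * (fst y - fst x)
     + uu x * (fst (snd y) - fst (snd x))
     + k*(1 - 1/sig_xx x) * (w_xx y - w_xx x)
     + k*(1 - 1/sig_zz x) * (w_zz y - w_zz x))
   = (hy*uy^2/2 - hx*ux^2/2 - ((0-ux^2/2)*(hy-hx) + ux*(hy*uy - hx*ux)))
     + (g*hy^2/2 - g*hx^2/2 - g*hx*(hy - hx))
     + (k*(hy*(ay - ln ay - 1)) - k*(hx*(ax - ln ax - 1)) - ((-k*ln ax)*(hy-hx) + k*(1-1/ax)*(hy*ay - hx*ax)))
     + (k*(hy*(zy - ln zy - 1)) - k*(hx*(zx - ln zx - 1)) - ((-k*ln zx)*(hy-hx) + k*(1-1/zx)*(hy*zy - hx*zx)))"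
    unfolding Ex Ey fx sx sy by (simp add: algebra_simps)
  also have "\<dots> \<ge> 0" unfolding T1 T2 Ta Tz using pos by simp
  finally show ?thesis unfolding k_def by simp
qed

lemma pos_comb:
  fixes w a :: "nat \<Rightarrow> real"
  assumes "finite I" "\<forall>j\<in>I. w j \<ge> 0" "sum w I = 1" "\<forall>j\<in>I. a j > 0"
  shows "(\<Sum>j\<in>I. w j * a j) > 0"
proof -
  obtain j where j: "j \<in> I" "w j > 0"
  proof (rule ccontr)
    assume "\<not> thesis"
    then have "\<forall>j\<in>I. w j = 0" using assms(2) that by force
    then have "sum w I = 0" by simp
    then show False using assms(3) by simp
  qed
  have "w j * a j \<le> (\<Sum>j\<in>I. w j * a j)"
    using j assms by (intro member_le_sum) (auto intro: mult_nonneg_nonneg less_imp_le)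
  moreover have "w j * a j > 0" using j assms by simp
  ultimately show ?thesis by linarith
qed

lemma jensen:
  fixes w :: "nat \<Rightarrow> real" and y :: "nat \<Rightarrow> state"
  assumes fin: "finite I" and w0: "\<forall>j\<in>I. w j \<ge> 0" and w1: "sum w I = 1"
    and ay: "\<forall>j\<in>I. admissible (y j)" and ax: "admissible x"
    and c0: "(\<Sum>j\<in>I. w j * fst (y j)) = fst x"
    and c1: "(\<Sum>j\<in>I. w j * fst (snd (y j))) = fst (snd x)"
    and c2: "(\<Sum>j\<in>I. w j * w_xx (y j)) = w_xx x"
    and c3: "(\<Sum>j\<in>I. w j * w_zz (y j)) = w_zz x"
    and eta: "eta>0" and lam: "lam>0" and g: "g > 0"
  shows "Energy g eta lam x \<le> (\<Sum>j\<in>I. w j * Energy g eta lam (y j))"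
proof -
  define b0 b1 b2 b3 where "b0 = g*hh x - (uu x)^2/2 - eta/(4*lam)*(ln (sig_xx x) + ln (sig_zz x))"
    and "b1 = uu x" and "b2 = eta/(4*lam)*(1 - 1/sig_xx x)" and "b3 = eta/(4*lam)*(1 - 1/sig_zz x)"
  define L where "L = (\<lambda>q. Energy g eta lam x + b0*(fst q - fst x) + b1*(fst (snd q) - fst (snd x))
      + b2*(w_xx q - w_xx x) + b3*(w_zz q - w_zz x))"
  have "(\<Sum>j\<in>I. w j * L (y j)) \<le> (\<Sum>j\<in>I. w j * Energy g eta lam (y j))"
  proof (rule sum_mono)
    fix j assume "j \<in> I"
    then show "w j * L (y j) \<le> w j * Energy g eta lam (y j)"
      using grad_ineq[OF ax _ eta lam g, of "y j"] ay w0 unfolding L_def b0_def b1_def b2_def b3_def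
      by (intro mult_left_mono) auto
  qed
  moreover have "(\<Sum>j\<in>I. w j * L (y j)) = Energy g eta lam x * sum w I
      + b0*((\<Sum>j\<in>I. w j * fst (y j)) - fst x * sum w I)
      + b1*((\<Sum>j\<in>I. w j * fst (snd (y j))) - fst (snd x) * sum w I)
      + b2*((\<Sum>j\<in>I. w j * w_xx (y j)) - w_xx x * sum w I)
      + b3*((\<Sum>j\<in>I. w j * w_zz (y j)) - w_zz x * sum w I)"
    unfolding L_def by (simp add: algebra_simps sum.distrib sum_subtractf sum_distrib_left sum_distrib_right)
  moreover have "\<dots> = Energy g eta lam x" unfolding c0 c1 c2 c3 w1 by simp
  ultimately show ?thesis by simp
qed



lemma flux_abs:
  fixes S1 S2 S3 f0 f1 f2 f3 F0 F1 F2 F3 :: real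
  assumes "S1 < S2" "S2 < S3" "f0 + S1*(F1-F0) = f1" "f1 + S2*(F2-F1) = f2" "f2 + S3*(F3-F2) = f3"
  shows "(if 0<S1 then f0 else if 0<S2 then f1 else if 0<S3 then f2 else f3)
           = f0 + min 0 S1*(F1-F0) + min 0 S2*(F2-F1) + min 0 S3*(F3-F2)"
    "(if 0<S1 then f0 else if 0<S2 then f1 else if 0<S3 then f2 else f3)
           = f3 - max 0 S1*(F1-F0) - max 0 S2*(F2-F1) - max 0 S3*(F3-F2)"
  using assms by (auto simp: min_def max_def algebra_simps)

definition DL :: "(state \<Rightarrow> real) \<Rightarrow> real \<Rightarrow> real \<Rightarrow> real \<Rightarrow> state \<Rightarrow> state \<Rightarrow> real" where
  "DL F g eta lam ql qr = min 0 (Sigma1 g eta lam ql qr) * (F (qstar_l g eta lam ql qr) - F ql)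
     + min 0 (Sigma2 g eta lam ql qr) * (F (qstar_r g eta lam ql qr) - F (qstar_l g eta lam ql qr))
     + min 0 (Sigma3 g eta lam ql qr) * (F qr - F (qstar_r g eta lam ql qr))"

definition DR :: "(state \<Rightarrow> real) \<Rightarrow> real \<Rightarrow> real \<Rightarrow> real \<Rightarrow> state \<Rightarrow> state \<Rightarrow> real" where
  "DR F g eta lam ql qr = max 0 (Sigma1 g eta lam ql qr) * (F (qstar_l g eta lam ql qr) - F ql)
     + max 0 (Sigma2 g eta lam ql qr) * (F (qstar_r g eta lam ql qr) - F (qstar_l g eta lam ql qr))
     + max 0 (Sigma3 g eta lam ql qr) * (F qr - F (qstar_r g eta lam ql qr))"

lemma fluxes:
  assumes g: "g>0" and eta: "eta>0" and lam: "lam>0" and al: "admissible ql" and ar: "admissible qr"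
  shows "fst (Flux_l g eta lam ql qr) = hh ql * uu ql + DL fst g eta lam ql qr"
    "fst (Flux_r g eta lam ql qr) = hh qr * uu qr - DR fst g eta lam ql qr"
    "fst (snd (Flux_l g eta lam ql qr)) = hh ql * (uu ql)^2 + Pres g eta lam ql + DL (\<lambda>q. fst (snd q)) g eta lam ql qr"
    "fst (snd (Flux_r g eta lam ql qr)) = hh qr * (uu qr)^2 + Pres g eta lam qr - DR (\<lambda>q. fst (snd q)) g eta lam ql qr"
    "fst (snd (snd (Flux_l g eta lam ql qr))) = w_xx ql * uu ql + DL w_xx g eta lam ql qr"
    "fst (snd (snd (Flux_r g eta lam ql qr))) = w_xx qr * uu qr - DR w_xx g eta lam ql qr"
    "snd (snd (snd (Flux_l g eta lam ql qr))) = w_zz ql * uu ql + DL w_zz g eta lam ql qr"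
    "snd (snd (snd (Flux_r g eta lam ql qr))) = w_zz qr * uu qr - DR w_zz g eta lam ql qr"
proof -
  note R = riemann[OF g eta lam al ar]
  define S1 S2 S3 y1 y2 ps where "S1 = Sigma1 g eta lam ql qr" and "S2 = Sigma2 g eta lam ql qr"
    and "S3 = Sigma3 g eta lam ql qr" and "y1 = qstar_l g eta lam ql qr" and "y2 = qstar_r g eta lam ql qr"
    and "ps = pistar g eta lam ql qr"
  note R = R[folded S1_def S2_def S3_def y1_def y2_def ps_def]
  have hf: "\<And>q. hh q = fst q" by (simp add: hh_def)
  have Fh: "Flux_h g eta lam ql qr = (if 0<S1 then hh ql*uu ql else if 0<S2 then hh y1*uu y1
      else if 0<S3 then hh y2*uu y2 else hh qr*uu qr)"
    unfolding Flux_h_def R0_def S1_def[symmetric] S2_def[symmetric] S3_def[symmetric] y1_def[symmetric]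
      y2_def[symmetric] by simp
  have Fhu: "Flux_hu g eta lam ql qr = (if 0<S1 then hh ql*(uu ql)^2 + Pres g eta lam ql
      else if 0<S2 then hh y1*(uu y1)^2 + ps
      else if 0<S3 then hh y2*(uu y2)^2 + ps else hh qr*(uu qr)^2 + Pres g eta lam qr)"
    unfolding Flux_hu_def R0_def S1_def[symmetric] S2_def[symmetric] S3_def[symmetric] y1_def[symmetric]
      y2_def[symmetric] ps_def[symmetric] by simp
  have e1: "hh ql*uu ql + S1*(hh y1 - hh ql) = hh y1*uu y1" using R(6) by simp
  have e2: "hh y1*uu y1 + S2*(hh y2 - hh y1) = hh y2*uu y2" using R(8) by simp
  have e3: "hh y2*uu y2 + S3*(hh qr - hh y2) = hh qr*uu qr" using R(10) by simp
  note A = flux_abs[OF R(1) R(2) e1 e2 e3]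
  have f1: "(hh ql*(uu ql)^2 + Pres g eta lam ql) + S1*(fst (snd y1) - fst (snd ql)) = hh y1*(uu y1)^2 + ps"
    using R(7) R(12) R(14) by simp
  have f2: "(hh y1*(uu y1)^2 + ps) + S2*(fst (snd y2) - fst (snd y1)) = hh y2*(uu y2)^2 + ps"
    using R(9) R(12) R(13) by simp
  have f3: "(hh y2*(uu y2)^2 + ps) + S3*(fst (snd qr) - fst (snd y2)) = hh qr*(uu qr)^2 + Pres g eta lam qr"
    using R(11) R(13) R(15) by simp
  note B = flux_abs[OF R(1) R(2) f1 f2 f3]
  show "fst (Flux_l g eta lam ql qr) = hh ql * uu ql + DL fst g eta lam ql qr"
    unfolding Flux_l_def DL_def S1_def[symmetric] S2_def[symmetric] S3_def[symmetric] y1_def[symmetric]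
      y2_def[symmetric] using A(1) Fh by (simp add: hf)
  show "fst (Flux_r g eta lam ql qr) = hh qr * uu qr - DR fst g eta lam ql qr"
    unfolding Flux_r_def DR_def S1_def[symmetric] S2_def[symmetric] S3_def[symmetric] y1_def[symmetric]
      y2_def[symmetric] using A(2) Fh by (simp add: hf)
  show "fst (snd (Flux_l g eta lam ql qr)) = hh ql * (uu ql)^2 + Pres g eta lam ql + DL (\<lambda>q. fst (snd q)) g eta lam ql qr"
    unfolding Flux_l_def DL_def S1_def[symmetric] S2_def[symmetric] S3_def[symmetric] y1_def[symmetric]
      y2_def[symmetric] using B(1) Fhu by simp
  show "fst (snd (Flux_r g eta lam ql qr)) = hh qr * (uu qr)^2 + Pres g eta lam qr - DR (\<lambda>q. fst (snd q)) g eta lam ql qr"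
    unfolding Flux_r_def DR_def S1_def[symmetric] S2_def[symmetric] S3_def[symmetric] y1_def[symmetric]
      y2_def[symmetric] using B(2) Fhu by simp
  show "fst (snd (snd (Flux_l g eta lam ql qr))) = w_xx ql * uu ql + DL w_xx g eta lam ql qr"
    unfolding Flux_l_def DL_def Flux_w_l_def Let_def by simp
  show "fst (snd (snd (Flux_r g eta lam ql qr))) = w_xx qr * uu qr - DR w_xx g eta lam ql qr"
    unfolding Flux_r_def DR_def Flux_w_r_def Let_def by simp
  show "snd (snd (snd (Flux_l g eta lam ql qr))) = w_zz ql * uu ql + DL w_zz g eta lam ql qr"
    unfolding Flux_l_def DL_def Flux_w_l_def Let_def by simp
  show "snd (snd (snd (Flux_r g eta lam ql qr))) = w_zz qr * uu qr - DR w_zz g eta lam ql qr"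
    unfolding Flux_r_def DR_def Flux_w_r_def Let_def by simp
qed

lemma scheme_comps:
  "scheme_step g eta lam dx dt qn i =
    (fst (qn i) - dt/dx i * (fst (Flux_l g eta lam (qn i) (qn (i+1))) - fst (Flux_r g eta lam (qn (i-1)) (qn i))),
     fst (snd (qn i)) - dt/dx i * (fst (snd (Flux_l g eta lam (qn i) (qn (i+1)))) - fst (snd (Flux_r g eta lam (qn (i-1)) (qn i)))),
     fst (snd (snd (qn i))) - dt/dx i * (fst (snd (snd (Flux_l g eta lam (qn i) (qn (i+1))))) - fst (snd (snd (Flux_r g eta lam (qn (i-1)) (qn i))))),
     snd (snd (snd (qn i))) - dt/dx i * (snd (snd (snd (Flux_l g eta lam (qn i) (qn (i+1))))) - snd (snd (snd (Flux_r g eta lam (qn (i-1)) (qn i))))))"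
  unfolding scheme_step_def Let_def by (simp split: prod.split)

lemma diag:
  assumes g: "g>0" and eta: "eta>0" and lam: "lam>0" and a: "admissible q"
  shows "qstar_l g eta lam q q = q" "qstar_r g eta lam q q = q"
proof -
  have h: "hh q > 0" using a by (simp add: admissible_def)
  have ap: "a_of g eta lam q > 0" using a_sq(2)[OF a g eta lam] .
  have c: "c_l g eta lam q q = hh q * a_of g eta lam q" "c_r g eta lam q q = hh q * a_of g eta lam q"
    unfolding c_l_def c_r_def by simp_all
  have cp: "hh q * a_of g eta lam q > 0" using h ap by simp
  have il: "hstar_l g eta lam q q = hh q" "hstar_r g eta lam q q = hh q"
    unfolding hstar_l_def hstar_r_def inv_hstar_l_def inv_hstar_r_def Let_def by simp_all
  have u: "ustar g eta lam q q = uu q"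
    unfolding ustar_def Let_def c using cp h ap by (simp add: field_simps)
  show "qstar_l g eta lam q q = q" unfolding qstar_l_mk il u using h adm_mk[OF a] by simp
  show "qstar_r g eta lam q q = q" unfolding qstar_r_mk il u using h adm_mk[OF a] by simp
qed



lemma sum7: "(\<Sum>j<(7::nat). f j) = f 0 + f 1 + f 2 + f 3 + f 4 + f 5 + (f 6::real)"
  by (simp add: numeral_eq_Suc lessThan_Suc add.commute add.left_commute)

lemma comb_id:
  fixes F :: "state \<Rightarrow> real" and q qp qm :: state and g eta lam t :: real
  defines "y \<equiv> (\<lambda>j. [q, qstar_l g eta lam q qp, qstar_r g eta lam q qp, qp, qm,
                 qstar_l g eta lam qm q, qstar_r g eta lam qm q] ! j)"
  defines "w \<equiv> (\<lambda>j. [1 + t*min 0 (Sigma1 g eta lam q qp) - t*max 0 (Sigma3 g eta lam qm q),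
                 t*(min 0 (Sigma2 g eta lam q qp) - min 0 (Sigma1 g eta lam q qp)),
                 t*(min 0 (Sigma3 g eta lam q qp) - min 0 (Sigma2 g eta lam q qp)),
                 -t*min 0 (Sigma3 g eta lam q qp),
                 t*max 0 (Sigma1 g eta lam qm q),
                 t*(max 0 (Sigma2 g eta lam qm q) - max 0 (Sigma1 g eta lam qm q)),
                 t*(max 0 (Sigma3 g eta lam qm q) - max 0 (Sigma2 g eta lam qm q))] ! j)"
  shows "(\<Sum>j<(7::nat). w j * F (y j)) = F q - t*(DL F g eta lam q qp + DR F g eta lam qm q)"
    "(\<Sum>j<(7::nat). w j) = 1"
  unfolding sum7 y_def w_def DL_def DR_def by (simp_all add: algebra_simps)

lemma lt7: "(j::nat) < 7 \<Longrightarrow> j = 0 \<or> j = 1 \<or> j = 2 \<or> j = 3 \<or> j = 4 \<or> j = 5 \<or> j = 6"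
  by auto

lemma adm_iff: "admissible q \<longleftrightarrow> fst q > 0 \<and> w_xx q > 0 \<and> w_zz q > 0"
  by (cases q) (auto simp: admissible_def hh_def sig_xx_def sig_zz_def w_xx_def w_zz_def zero_less_divide_iff)

lemma step:
  assumes g: "g>0" and eta: "eta>0" and lam: "lam>0" and dx: "dx i > 0" and dt: "dt > 0"
    and adm: "\<forall>i. admissible (qn i)"
    and cfl: "\<forall>i. dt * Amax g eta lam (qn i) (qn (i + 1)) \<le> min (dx i) (dx (i + 1)) / 2"
  shows "Energy g eta lam (scheme_step g eta lam dx dt qn i) - Energy g eta lam (qn i)
     + dt / dx i * ((Gflux g eta lam (qn i) + DL (Energy g eta lam) g eta lam (qn i) (qn (i+1)))
                   - (Gflux g eta lam (qn (i-1)) + DL (Energy g eta lam) g eta lam (qn (i-1)) (qn i))) \<le> 0"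
proof -
  define q qp qm where "q = qn i" and "qp = qn (i+1)" and "qm = qn (i-1)"
  define t where "t = dt / dx i"
  define x where "x = scheme_step g eta lam dx dt qn i"
  have t: "t > 0" using dt dx unfolding t_def by simp
  have aq: "admissible q" "admissible qp" "admissible qm" using adm unfolding q_def qp_def qm_def by auto
  note Rp = riemann[OF g eta lam aq(1) aq(2)]
  note Rm = riemann[OF g eta lam aq(3) aq(1)]
  note Fp = fluxes[OF g eta lam aq(1) aq(2)]
  note Fm = fluxes[OF g eta lam aq(3) aq(1)]
  have qm': "qn (i - 1) = qm" unfolding qm_def ..
  have xc: "fst x = fst q - t*(DL fst g eta lam q qp + DR fst g eta lam qm q)"
    "fst (snd x) = fst (snd q) - t*(DL (\<lambda>q. fst (snd q)) g eta lam q qp + DR (\<lambda>q. fst (snd q)) g eta lam qm q)"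
    "w_xx x = w_xx q - t*(DL w_xx g eta lam q qp + DR w_xx g eta lam qm q)"
    "w_zz x = w_zz q - t*(DL w_zz g eta lam q qp + DR w_zz g eta lam qm q)"
    unfolding x_def scheme_comps qm' q_def[symmetric] qp_def[symmetric] t_def[symmetric] Fp Fm
    by (simp_all add: w_xx_def w_zz_def algebra_simps)
  have c1: "dt * Amax g eta lam q qp \<le> dx i / 2" using cfl[rule_format, of i] unfolding q_def qp_def by simp
  have c2: "dt * Amax g eta lam qm q \<le> dx i / 2" using cfl[rule_format, of "i-1"] unfolding q_def qm_def by simp
  have ab: "\<And>a b. dt * Amax g eta lam a b \<le> dx i / 2 \<Longrightarrow>
      t*\<bar>Sigma1 g eta lam a b\<bar> \<le> 1/2 \<and> t*\<bar>Sigma2 g eta lam a b\<bar> \<le> 1/2 \<and> t*\<bar>Sigma3 g eta lam a b\<bar> \<le> 1/2"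
  proof -
    fix a b assume h: "dt * Amax g eta lam a b \<le> dx i / 2"
    have "\<And>s. \<bar>s\<bar> \<le> Amax g eta lam a b \<Longrightarrow> t*\<bar>s\<bar> \<le> 1/2"
    proof -
      fix s :: real assume "\<bar>s\<bar> \<le> Amax g eta lam a b"
      then have "dt*\<bar>s\<bar> \<le> dx i/2" using h dt by (meson mult_left_mono less_imp_le order_trans)
      then show "t*\<bar>s\<bar> \<le> 1/2" unfolding t_def using dx by (simp add: field_simps)
    qed
    then show "t*\<bar>Sigma1 g eta lam a b\<bar> \<le> 1/2 \<and> t*\<bar>Sigma2 g eta lam a b\<bar> \<le> 1/2 \<and> t*\<bar>Sigma3 g eta lam a b\<bar> \<le> 1/2"
      unfolding Amax_def by auto
  qed
  note cp = ab[OF c1] and cm = ab[OF c2]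
  define y where "y \<equiv> (\<lambda>j. [q, qstar_l g eta lam q qp, qstar_r g eta lam q qp, qp, qm,
                 qstar_l g eta lam qm q, qstar_r g eta lam qm q] ! j)"
  define w where "w \<equiv> (\<lambda>j. [1 + t*min 0 (Sigma1 g eta lam q qp) - t*max 0 (Sigma3 g eta lam qm q),
                 t*(min 0 (Sigma2 g eta lam q qp) - min 0 (Sigma1 g eta lam q qp)),
                 t*(min 0 (Sigma3 g eta lam q qp) - min 0 (Sigma2 g eta lam q qp)),
                 -t*min 0 (Sigma3 g eta lam q qp),
                 t*max 0 (Sigma1 g eta lam qm q),
                 t*(max 0 (Sigma2 g eta lam qm q) - max 0 (Sigma1 g eta lam qm q)),
                 t*(max 0 (Sigma3 g eta lam qm q) - max 0 (Sigma2 g eta lam qm q))] ! j)"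
  note CI = comb_id[of t g eta lam q qp qm, folded y_def w_def]
  have w0: "\<forall>j\<in>{..<7}. w j \<ge> 0"
  proof
    fix j assume "j \<in> {..<(7::nat)}"
    then have "j < 7" by simp
    have m1: "t*min 0 (Sigma1 g eta lam q qp) \<ge> -1/2"
    proof -
      have "t*min 0 (Sigma1 g eta lam q qp) \<ge> t*(-\<bar>Sigma1 g eta lam q qp\<bar>)" using t by (intro mult_left_mono) auto
      then show ?thesis using cp by simp
    qed
    have m2: "t*max 0 (Sigma3 g eta lam qm q) \<le> 1/2"
    proof -
      have "t*max 0 (Sigma3 g eta lam qm q) \<le> t*\<bar>Sigma3 g eta lam qm q\<bar>" using t by (intro mult_left_mono) auto
      then show ?thesis using cm by simp
    qed
    have mono: "min 0 (Sigma1 g eta lam q qp) \<le> min 0 (Sigma2 g eta lam q qp)"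
      "min 0 (Sigma2 g eta lam q qp) \<le> min 0 (Sigma3 g eta lam q qp)"
      "max 0 (Sigma1 g eta lam qm q) \<le> max 0 (Sigma2 g eta lam qm q)"
      "max 0 (Sigma2 g eta lam qm q) \<le> max 0 (Sigma3 g eta lam qm q)"
      using Rp(1,2) Rm(1,2) by auto
    show "w j \<ge> 0" using lt7[OF \<open>j < 7\<close>] m1 m2 mono t unfolding w_def
      by (elim disjE) (auto intro!: mult_nonneg_nonneg simp: mult_le_0_iff)
  qed
  have ay: "\<forall>j\<in>{..<7}. admissible (y j)"
  proof
    fix j assume "j \<in> {..<(7::nat)}"
    then have "j < 7" by simp
    show "admissible (y j)" using lt7[OF \<open>j < 7\<close>] aq Rp(3,4) Rm(3,4) unfolding y_def
      by (elim disjE) auto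
  qed
  have w1: "sum w {..<7} = 1" using CI(2) by simp
  have ax: "admissible x"
  proof -
    have "(\<Sum>j<7. w j * fst (y j)) > 0"
      using pos_comb[OF _ w0 w1] ay by (simp add: adm_iff)
    moreover have "(\<Sum>j<7. w j * w_xx (y j)) > 0"
      using pos_comb[OF _ w0 w1] ay by (simp add: adm_iff)
    moreover have "(\<Sum>j<7. w j * w_zz (y j)) > 0"
      using pos_comb[OF _ w0 w1] ay by (simp add: adm_iff)
    ultimately show ?thesis unfolding adm_iff xc CI(1) by simp
  qed
  have J: "Energy g eta lam x \<le> (\<Sum>j<7. w j * Energy g eta lam (y j))"
    apply (rule jensen[OF _ w0 w1 ay ax _ _ _ _ eta lam g])
        apply simp
       apply (simp add: CI(1) xc)
      apply (use CI(1)[of "\<lambda>q. fst (snd q)"] xc in simp)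
     apply (simp add: CI(1) xc)
    apply (simp add: CI(1) xc)
    done
  have J2: "Energy g eta lam x \<le> Energy g eta lam q - t*(DL (Energy g eta lam) g eta lam q qp + DR (Energy g eta lam) g eta lam qm q)"
    using J CI(1)[of "Energy g eta lam"] by simp
  have ent: "Gflux g eta lam qm - Gflux g eta lam q + DL (Energy g eta lam) g eta lam qm q + DR (Energy g eta lam) g eta lam qm q \<ge> 0"
  proof -
    have "DL (Energy g eta lam) g eta lam qm q + DR (Energy g eta lam) g eta lam qm q
       = Sigma1 g eta lam qm q * (Energy g eta lam (qstar_l g eta lam qm q) - Energy g eta lam qm)
       + Sigma2 g eta lam qm q * (Energy g eta lam (qstar_r g eta lam qm q) - Energy g eta lam (qstar_l g eta lam qm q))
       + Sigma3 g eta lam qm q * (Energy g eta lam q - Energy g eta lam (qstar_r g eta lam qm q))"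
      unfolding DL_def DR_def by (simp add: algebra_simps min_def max_def)
    then show ?thesis using Rm(5) by simp
  qed
  have "Energy g eta lam x - Energy g eta lam q
     + t * ((Gflux g eta lam q + DL (Energy g eta lam) g eta lam q qp)
          - (Gflux g eta lam qm + DL (Energy g eta lam) g eta lam qm q))
     \<le> - t * (Gflux g eta lam qm - Gflux g eta lam q + DL (Energy g eta lam) g eta lam qm q + DR (Energy g eta lam) g eta lam qm q)"
    using J2 by (simp add: algebra_simps)
  also have "\<dots> \<le> 0" using ent t by simp
  finally show ?thesis unfolding x_def q_def qp_def qm_def t_def .
qed

theorem lemma3:
  fixes g eta lam :: real
  assumes "g > 0" and "eta > 0" and "lam > 0"
  shows "(\<forall>ql qr. admissible ql \<and> admissible qr \<longrightarrow>
            inv_hstar_l g eta lam ql qr > 0 \<and> inv_hstar_r g eta lam ql qr > 0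
          \<and> (\<forall>h \<in> between (hh ql) (hstar_l g eta lam ql qr).
               h^2 * dPdh g eta lam h (s_xx ql) (s_zz ql) \<le> (c_l g eta lam ql qr)^2)
          \<and> (\<forall>h \<in> between (hh qr) (hstar_r g eta lam ql qr).
               h^2 * dPdh g eta lam h (s_xx qr) (s_zz qr) \<le> (c_r g eta lam ql qr)^2))
       \<and> (\<exists>GG :: state \<Rightarrow> state \<Rightarrow> real.
            (\<forall>q. admissible q \<longrightarrow> GG q q = Gflux g eta lam q)
          \<and> (\<forall>(dx :: int \<Rightarrow> real) (dt :: real) (qn :: int \<Rightarrow> state).
               (\<forall>i. dx i > 0) \<longrightarrow> dt > 0 \<longrightarrow> (\<forall>i. admissible (qn i)) \<longrightarrow>
               (\<forall>i. dt * Amax g eta lam (qn i) (qn (i + 1)) \<le> min (dx i) (dx (i + 1)) / 2) \<longrightarrow>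
               (\<forall>i. Energy g eta lam (scheme_step g eta lam dx dt qn i) - Energy g eta lam (qn i)
                    + dt / dx i * (GG (qn i) (qn (i + 1)) - GG (qn (i - 1)) (qn i)) \<le> 0)))"
proof (intro conjI)
  note g = assms(1) and eta = assms(2) and lam = assms(3)
  show "\<forall>ql qr. admissible ql \<and> admissible qr \<longrightarrow>
            inv_hstar_l g eta lam ql qr > 0 \<and> inv_hstar_r g eta lam ql qr > 0
          \<and> (\<forall>h \<in> between (hh ql) (hstar_l g eta lam ql qr).
               h^2 * dPdh g eta lam h (s_xx ql) (s_zz ql) \<le> (c_l g eta lam ql qr)^2)
          \<and> (\<forall>h \<in> between (hh qr) (hstar_r g eta lam ql qr).
               h^2 * dPdh g eta lam h (s_xx qr) (s_zz qr) \<le> (c_r g eta lam ql qr)^2)"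
  proof (intro allI impI)
    fix ql qr assume "admissible ql \<and> admissible qr"
    then have al: "admissible ql" and ar: "admissible qr" by auto
    note wf = wave_facts[OF g eta lam al ar]
    note sp = speeds[OF g eta lam al ar]
    show "inv_hstar_l g eta lam ql qr > 0 \<and> inv_hstar_r g eta lam ql qr > 0
          \<and> (\<forall>h \<in> between (hh ql) (hstar_l g eta lam ql qr).
               h^2 * dPdh g eta lam h (s_xx ql) (s_zz ql) \<le> (c_l g eta lam ql qr)^2)
          \<and> (\<forall>h \<in> between (hh qr) (hstar_r g eta lam ql qr).
               h^2 * dPdh g eta lam h (s_xx qr) (s_zz qr) \<le> (c_r g eta lam ql qr)^2)"
      using wf(3) wf(4) subchar[OF g eta lam al sp(1) wf(3) sp(3)] subchar[OF g eta lam ar sp(4) wf(4) sp(6)]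
      unfolding wf(14) wf(15) by auto
  qed
  show "\<exists>GG :: state \<Rightarrow> state \<Rightarrow> real.
            (\<forall>q. admissible q \<longrightarrow> GG q q = Gflux g eta lam q)
          \<and> (\<forall>(dx :: int \<Rightarrow> real) (dt :: real) (qn :: int \<Rightarrow> state).
               (\<forall>i. dx i > 0) \<longrightarrow> dt > 0 \<longrightarrow> (\<forall>i. admissible (qn i)) \<longrightarrow>
               (\<forall>i. dt * Amax g eta lam (qn i) (qn (i + 1)) \<le> min (dx i) (dx (i + 1)) / 2) \<longrightarrow>
               (\<forall>i. Energy g eta lam (scheme_step g eta lam dx dt qn i) - Energy g eta lam (qn i)
                    + dt / dx i * (GG (qn i) (qn (i + 1)) - GG (qn (i - 1)) (qn i)) \<le> 0))"
  proof (intro exI[of _ "\<lambda>a b. Gflux g eta lam a + DL (Energy g eta lam) g eta lam a b"] conjI allI impI)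
    fix q :: state assume a: "admissible q"
    show "Gflux g eta lam q + DL (Energy g eta lam) g eta lam q q = Gflux g eta lam q"
      unfolding DL_def diag[OF g eta lam a] by simp
  next
    fix dx :: "int \<Rightarrow> real" and dt :: real and qn :: "int \<Rightarrow> state" and i :: int
    assume dx: "\<forall>i. dx i > 0" and dt: "dt > 0" and adm: "\<forall>i. admissible (qn i)"
      and cfl: "\<forall>i. dt * Amax g eta lam (qn i) (qn (i + 1)) \<le> min (dx i) (dx (i + 1)) / 2"
    show "Energy g eta lam (scheme_step g eta lam dx dt qn i) - Energy g eta lam (qn i)
       + dt / dx i * ((Gflux g eta lam (qn i) + DL (Energy g eta lam) g eta lam (qn i) (qn (i + 1)))
          - (Gflux g eta lam (qn (i - 1)) + DL (Energy g eta lam) g eta lam (qn (i - 1)) (qn i))) \<le> 0"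
      using step[OF g eta lam _ dt adm cfl] dx by simp
  qed
qed

end
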